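(* Fix a player $i$ and suppress the index $i$ (write $d=d_i$, $\theta=\theta_i$, $Q=Q_i$). Assume $\theta$ is steep. Let $Y(t)$ be a solution of the FTQL dynamics and $X(t)=Q(Y(t))$ (player $i$'s component). Let $X(t)=\sum_{\alpha=1}^{d}x_\alpha(t)\,u_\alpha(t)u_\alpha(t)^\dagger$ be an eigendecomposition of $X(t)$ with orthonormal eigenvectors $u_\alpha(t)\in\mathbb C^{d}$, where the eigenvalues $x_\alpha(t)$ and eigenvectors $u_\alpha(t)$ depend differentiably on $t$. Write $V_{\alpha\beta}=u_\alpha^\dagger V_i(X)\,u_\beta$ and $[\dot X]_{\alpha\beta}=u_\alpha^\dagger \dot X u_\beta$. Then $$[\dot X]_{\alpha\beta}=\begin{cases}\dfrac{V_{\alpha\alpha}}{\theta''(x_\alpha)}-\dfrac{\sum_{\gamma}V_{\gamma\gamma}/\theta''(x_\gamma)}{\sum_{\gamma}\theta''(x_\alpha)/\theta''(x_\gamma)}, & \alpha=\beta,\\[2ex] \dfrac{x_\beta-x_\alpha}{\theta'(x_\beta)-\theta'(x_\alpha)}\,V_{\alpha\beta}, & \alpha\neq\beta,\end{cases}$$ with the convention $(x-y)/(\theta'(x)-\theta'(y)):=1/\theta''(x)$ when $y=x$.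
   Context: Quantum game: finite set of players $i\in\{1,\dots,N\}$; for each $i$ an integer $d_i\ge1$. $\mathbb H^{d}$ denotes the real vector space of $d\times d$ complex Hermitian matrices. Player $i$'s set of mixed states is the spectraplex $\mathcal X_i=\{X_i\in\mathbb H^{d_i}:X_i\succeq0,\ \operatorname{tr}X_i=1\}$, and $\mathcal X=\prod_i\mathcal X_i$. There is a finite outcome set $\Omega$, positive semidefinite operators $P_\omega$ on $\mathbb C^{d_1}\otimes\cdots\otimes\mathbb C^{d_N}$ with $\sum_\omega P_\omega=I$, and real functions $U_i:\Omega\to\mathbb R$; the payoff of player $i$ is $u_i(X)=\sum_{\omega}U_i(\omega)\operatorname{tr}[P_\omega(X_1\otimes\cdots\otimes X_N)]$, which is linear in each $X_j$ separately. The payoff gradient $V_i(X)\in\mathbb H^{d_i}$ is the unique Hermitian matrix with $\sum_\omega U_i(\omega)\operatorname{tr}[P_\omega(X_1\otimes\cdots\otimes X_{i-1}\otimes A\otimes X_{i+1}\otimes\cdots\otimes X_N)]=\operatorname{tr}(A\,V_i(X))$ for all $A\in\mathbb H^{d_i}$; it does not depend on $X_i$ and $u_i(X)=\operatorname{tr}(X_iV_i(X))$. For a function $f:\mathbb R\to\mathbb R$ (or on an interval) and Hermitian $A=\sum_k\lambda_kv_kv_k^\dagger$, $f(A)=\sum_kf(\lambda_k)v_kv_k^\dagger$. Regularizers: for each $i$, $h_i(X_i)=\operatorname{tr}\theta_i(X_i)$ where $\theta_i:[0,1]\to\mathbb R$ is continuous, twice differentiable on $(0,1]$, $\theta_i(0)=0$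 and $\inf_{x\in(0,1]}\theta_i''(x)>0$; $\theta_i$ is called steep if $\lim_{x\to0^+}\theta_i'(x)=-\infty$. Mirror map: $Q_i(Y_i)=\arg\max_{X_i\in\mathcal X_i}\{\operatorname{tr}(Y_iX_i)-h_i(X_i)\}$ for $Y_i\in\mathbb H^{d_i}$, and $Q=\prod_iQ_i$. The FTQL dynamics are $\dot Y_i(t)=V_i(X(t))$, $X_i(t)=Q_i(Y_i(t))$ for all $i$, with initial condition $Y(0)\in\prod_i\mathbb H^{d_i}$. *)

theory Defs
  imports "HOL-Analysis.Analysis"
begin

text \<open>Complex d x d matrices are represented as functions nat => nat => complex,
  with indices 0..<d; entries outside that range are required to be 0 where relevant.\<close>

type_synonym cmat = "nat \<Rightarrow> nat \<Rightarrow> complex"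

definition herm :: "nat \<Rightarrow> cmat \<Rightarrow> bool" where
  "herm d A \<longleftrightarrow> (\<forall>j k. (j < d \<and> k < d \<longrightarrow> A j k = cnj (A k j))
                       \<and> (\<not> (j < d \<and> k < d) \<longrightarrow> A j k = 0))"

definition mtrace :: "nat \<Rightarrow> cmat \<Rightarrow> complex" where
  "mtrace d A = (\<Sum>j<d. A j j)"

definition mmult :: "nat \<Rightarrow> cmat \<Rightarrow> cmat \<Rightarrow> cmat" where
  "mmult d A B = (\<lambda>j k. if j < d \<and> k < d then (\<Sum>l<d. A j l * B l k) else 0)"

definition psd :: "nat \<Rightarrow> cmat \<Rightarrow> bool" where
  "psd d A \<longleftrightarrow> herm d A \<and>
     (\<forall>v :: nat \<Rightarrow> complex. 0 \<le> Re (\<Sum>j<d. \<Sum>k<d. cnj (v j) * A j k * v k))"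

definition spectraplex :: "nat \<Rightarrow> cmat set" where
  "spectraplex d = {X. psd d X \<and> mtrace d X = 1}"

text \<open>v a is the a-th vector (components v a j, j < d); orthonormal family of d vectors.\<close>
definition orthonormal_fam :: "nat \<Rightarrow> (nat \<Rightarrow> nat \<Rightarrow> complex) \<Rightarrow> bool" where
  "orthonormal_fam d v \<longleftrightarrow>
     (\<forall>a<d. \<forall>b<d. (\<Sum>j<d. cnj (v a j) * v b j) = (if a = b then 1 else 0))"

definition eig_decomp :: "nat \<Rightarrow> cmat \<Rightarrow> (nat \<Rightarrow> real) \<Rightarrow> (nat \<Rightarrow> nat \<Rightarrow> complex) \<Rightarrow> bool" where
  "eig_decomp d A lam v \<longleftrightarrow> orthonormal_fam d v \<and>
     (\<forall>j<d. \<forall>k<d. A j k = (\<Sum>a<d. of_real (lam a) * v a j * cnj (v a k)))"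

definition mat_fun :: "nat \<Rightarrow> (real \<Rightarrow> real) \<Rightarrow> cmat \<Rightarrow> cmat" where
  "mat_fun d f A = (THE B. \<exists>lam v. eig_decomp d A lam v \<and>
     (\<forall>j k. B j k = (if j < d \<and> k < d
                      then (\<Sum>a<d. of_real (f (lam a)) * v a j * cnj (v a k)) else 0)))"

definition hreg :: "nat \<Rightarrow> (real \<Rightarrow> real) \<Rightarrow> cmat \<Rightarrow> real" where
  "hreg d \<theta> X = Re (mtrace d (mat_fun d \<theta> X))"

definition Qmap :: "nat \<Rightarrow> (real \<Rightarrow> real) \<Rightarrow> cmat \<Rightarrow> cmat" where
  "Qmap d \<theta> Y = (THE X. X \<in> spectraplex d \<and>
     (\<forall>X' \<in> spectraplex d. Re (mtrace d (mmult d Y X')) - hreg d \<theta> X'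
                           \<le> Re (mtrace d (mmult d Y X)) - hreg d \<theta> X))"

text \<open>Joint system: players 0..<N, joint basis index a :: nat => nat with a p < d p for p < N
  and a p = 0 for p >= N.  Operators on the tensor product are functions of two joint indices.\<close>

definition jidx :: "nat \<Rightarrow> (nat \<Rightarrow> nat) \<Rightarrow> (nat \<Rightarrow> nat) set" where
  "jidx N d = {a. \<forall>p. (p < N \<longrightarrow> a p < d p) \<and> (N \<le> p \<longrightarrow> a p = 0)}"

type_synonym jop = "(nat \<Rightarrow> nat) \<Rightarrow> (nat \<Rightarrow> nat) \<Rightarrow> complex"

definition tensor :: "nat \<Rightarrow> (nat \<Rightarrow> cmat) \<Rightarrow> jop" where
  "tensor N X = (\<lambda>a b. \<Prod>p<N. X p (a p) (b p))"

definition jtrace_prod :: "nat \<Rightarrow> (nat \<Rightarrow> nat) \<Rightarrow> jop \<Rightarrow> jop \<Rightarrow> complex" where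
  "jtrace_prod N d P T = (\<Sum>a\<in>jidx N d. \<Sum>c\<in>jidx N d. P a c * T c a)"

definition jpsd :: "nat \<Rightarrow> (nat \<Rightarrow> nat) \<Rightarrow> jop \<Rightarrow> bool" where
  "jpsd N d P \<longleftrightarrow> (\<forall>a\<in>jidx N d. \<forall>b\<in>jidx N d. P a b = cnj (P b a)) \<and>
     (\<forall>v :: (nat \<Rightarrow> nat) \<Rightarrow> complex.
        0 \<le> Re (\<Sum>a\<in>jidx N d. \<Sum>b\<in>jidx N d. cnj (v a) * P a b * v b))"

definition povm :: "nat \<Rightarrow> (nat \<Rightarrow> nat) \<Rightarrow> 'w set \<Rightarrow> ('w \<Rightarrow> jop) \<Rightarrow> bool" where
  "povm N d \<Omega> P \<longleftrightarrow> finite \<Omega> \<and> (\<forall>\<omega>\<in>\<Omega>. jpsd N d (P \<omega>)) \<and>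
     (\<forall>a\<in>jidx N d. \<forall>b\<in>jidx N d. (\<Sum>\<omega>\<in>\<Omega>. P \<omega> a b) = (if a = b then 1 else 0))"

definition Vgrad :: "nat \<Rightarrow> (nat \<Rightarrow> nat) \<Rightarrow> 'w set \<Rightarrow> ('w \<Rightarrow> jop) \<Rightarrow> (nat \<Rightarrow> 'w \<Rightarrow> real)
                     \<Rightarrow> nat \<Rightarrow> (nat \<Rightarrow> cmat) \<Rightarrow> cmat" where
  "Vgrad N d \<Omega> P U i X = (THE V. herm (d i) V \<and>
     (\<forall>A. herm (d i) A \<longrightarrow>
        (\<Sum>\<omega>\<in>\<Omega>. of_real (U i \<omega>) * jtrace_prod N d (P \<omega>) (tensor N (X(i := A))))
          = mtrace (d i) (mmult (d i) A V)))"

definition regularizer_kernel :: "(real \<Rightarrow> real) \<Rightarrow> (real \<Rightarrow> real) \<Rightarrow> (real \<Rightarrow> real) \<Rightarrow> bool" where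
  "regularizer_kernel \<theta> th1 th2 \<longleftrightarrow>
     continuous_on {0..1} \<theta> \<and> \<theta> 0 = 0 \<and>
     (\<forall>x\<in>{0<..1}. (\<theta> has_real_derivative th1 x) (at x within {0<..1})) \<and>
     (\<forall>x\<in>{0<..1}. (th1 has_real_derivative th2 x) (at x within {0<..1})) \<and>
     (\<exists>c>0. \<forall>x\<in>{0<..1}. c \<le> th2 x)"

definition steep :: "(real \<Rightarrow> real) \<Rightarrow> bool" where
  "steep th1 \<longleftrightarrow> filterlim th1 at_bot (at_right 0)"

definition mel :: "nat \<Rightarrow> (nat \<Rightarrow> nat \<Rightarrow> complex) \<Rightarrow> cmat \<Rightarrow> nat \<Rightarrow> nat \<Rightarrow> complex" where
  "mel d u M a b = (\<Sum>j<d. \<Sum>k<d. cnj (u a j) * M j k * u b k)"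

definition dquot :: "(real \<Rightarrow> real) \<Rightarrow> (real \<Rightarrow> real) \<Rightarrow> real \<Rightarrow> real \<Rightarrow> real" where
  "dquot th1 th2 x y = (if y = x then 1 / th2 x else (x - y) / (th1 x - th1 y))"

end

theory Submission
  imports Defs "Jordan_Normal_Form.Spectral_Radius"
begin

lemma dim_exists:
  fixes r :: "nat \<Rightarrow> nat \<Rightarrow> complex"
  assumes "finite S" "k < card S"
  shows "\<exists>w::nat\<Rightarrow>complex. (\<forall>j. j\<notin>S \<longrightarrow> w j = 0) \<and> (\<exists>j\<in>S. w j \<noteq> 0)
          \<and> (\<forall>i<k. (\<Sum>j\<in>S. r i j * w j) = 0)"
  using assms
proof (induction k arbitrary: S r)
  case 0
  then obtain j0 where "j0 \<in> S" by (metis card.empty ex_in_conv less_irrefl)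
  then show ?case by (rule_tac x="\<lambda>j. if j = j0 then 1 else 0" in exI) auto
next
  case (Suc k)
  show ?case
  proof (cases "\<forall>j\<in>S. r k j = 0")
    case True
    from Suc.IH[OF Suc.prems(1), of r] Suc.prems(2) obtain w where
      w: "\<forall>j. j\<notin>S \<longrightarrow> w j = 0" "\<exists>j\<in>S. w j \<noteq> 0" "\<forall>i<k. (\<Sum>j\<in>S. r i j * w j) = 0"
      by auto
    have "(\<Sum>j\<in>S. r k j * w j) = 0" using True by simp
    with w show ?thesis by (metis less_Suc_eq)
  next
    case False
    then obtain j0 where j0: "j0 \<in> S" "r k j0 \<noteq> 0" by auto
    define c where "c = r k j0"
    define r' where "r' = (\<lambda>i j. r i j - r i j0 * r k j / c)"
    have fin: "finite (S - {j0})" using Suc.prems by auto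
    have card: "k < card (S - {j0})" using Suc.prems j0 by auto
    from Suc.IH[OF fin card, of r'] obtain w where
      w: "\<forall>j. j\<notin>S - {j0} \<longrightarrow> w j = 0" "\<exists>j\<in>S - {j0}. w j \<noteq> 0"
         "\<forall>i<k. (\<Sum>j\<in>S - {j0}. r' i j * w j) = 0"
      by auto
    define L where "L = (\<Sum>j\<in>S - {j0}. r k j * w j)"
    define w' where "w' = w(j0 := - L / c)"
    have c0: "c \<noteq> 0" using j0 c_def by auto
    have split: "\<And>f. (\<Sum>j\<in>S. f j) = f j0 + (\<Sum>j\<in>S - {j0}. f j)"
      using Suc.prems(1) j0(1) by (simp add: sum.remove)
    have eqw: "\<And>j. j \<in> S - {j0} \<Longrightarrow> w' j = w j" unfolding w'_def by auto
    have sw: "\<And>f. (\<Sum>j\<in>S - {j0}. f j * w' j) = (\<Sum>j\<in>S - {j0}. f j * w j)"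
      by (rule sum.cong) (auto simp: eqw)
    have A: "(\<Sum>j\<in>S. r k j * w' j) = 0"
      unfolding split sw using c0 by (simp add: w'_def L_def c_def)
    have B: "(\<Sum>j\<in>S. r i j * w' j) = 0" if i: "i < k" for i
    proof -
      have "(\<Sum>j\<in>S - {j0}. r' i j * w j) = 0" using w(3) i by auto
      also have "(\<Sum>j\<in>S - {j0}. r' i j * w j) =
          (\<Sum>j\<in>S - {j0}. r i j * w j) - r i j0 / c * L"
        unfolding r'_def L_def by (simp add: algebra_simps sum_subtractf sum_distrib_left)
      finally have "(\<Sum>j\<in>S - {j0}. r i j * w j) = r i j0 / c * L" by simp
      then show ?thesis unfolding split sw by (simp add: w'_def)
    qed
    show ?thesis
    proof (intro exI conjI)
      show "\<forall>j. j \<notin> S \<longrightarrow> w' j = 0" using w(1) j0 by (auto simp: w'_def)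
      show "\<exists>j\<in>S. w' j \<noteq> 0" using w(2) eqw by (metis DiffD1)
      show "\<forall>i<Suc k. (\<Sum>j\<in>S. r i j * w' j) = 0" using A B by (metis less_Suc_eq)
    qed
  qed
qed

definition ip :: "nat \<Rightarrow> (nat \<Rightarrow> complex) \<Rightarrow> (nat \<Rightarrow> complex) \<Rightarrow> complex" where
  "ip d v w = (\<Sum>j<d. cnj (v j) * w j)"

lemma ip_self_real: "ip d v v = of_real (\<Sum>j<d. (cmod (v j))\<^sup>2)"
  unfolding ip_def of_real_sum by (rule sum.cong[OF refl]) (metis complex_norm_square mult.commute)

lemma ip_self_zero: "ip d v v = 0 \<Longrightarrow> j < d \<Longrightarrow> v j = 0"
proof -
  assume "ip d v v = 0" "j < d"
  then have "complex_of_real (\<Sum>j<d. (cmod (v j))\<^sup>2) = 0" by (simp only: ip_self_real)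
  then have "(\<Sum>j<d. (cmod (v j))\<^sup>2) = 0" by (simp only: of_real_eq_0_iff)
  then have "\<forall>j\<in>{..<d}. (cmod (v j))\<^sup>2 = 0" by (subst sum_nonneg_eq_0_iff[symmetric]) auto
  with \<open>j < d\<close> show "v j = 0" by auto
qed

lemma on_ip: "orthonormal_fam d v \<Longrightarrow> a < d \<Longrightarrow> b < d \<Longrightarrow> ip d (v a) (v b) = (if a = b then 1 else 0)"
  unfolding orthonormal_fam_def ip_def by blast

lemma orth_expand:
  assumes on: "orthonormal_fam d v" and j: "j < d"
  shows "w j = (\<Sum>a<d. ip d (v a) w * v a j)"
proof -
  define co where "co = (\<lambda>a. ip d (v a) w)"
  define z where "z = (\<lambda>j. w j - (\<Sum>a<d. co a * v a j))"
  have ipz: "ip d (v b) z = 0" if b: "b < d" for b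
  proof -
    have "ip d (v b) z = ip d (v b) w - (\<Sum>j<d. cnj (v b j) * (\<Sum>a<d. co a * v a j))"
      unfolding ip_def z_def by (simp only: right_diff_distrib sum_subtractf)
    also have "(\<Sum>j<d. cnj (v b j) * (\<Sum>a<d. co a * v a j)) = (\<Sum>j<d. \<Sum>a<d. co a * (cnj (v b j) * v a j))"
      by (simp only: sum_distrib_left mult.left_commute)
    also have "\<dots> = (\<Sum>a<d. \<Sum>j<d. co a * (cnj (v b j) * v a j))" by (rule sum.swap)
    also have "\<dots> = (\<Sum>a<d. co a * ip d (v b) (v a))"
      unfolding ip_def by (simp only: sum_distrib_left)
    also have "\<dots> = (\<Sum>a<d. if a = b then co a else 0)"
      by (rule sum.cong[OF refl]) (simp add: on_ip[OF on] b)
    also have "\<dots> = co b" using b by simp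
    finally show ?thesis by (simp add: co_def)
  qed
  have "\<forall>j<d. z j = 0"
  proof (rule ccontr)
    assume "\<not> (\<forall>j<d. z j = 0)"
    then obtain j1 where j1: "j1 < d" "z j1 \<noteq> 0" by auto
    have zz: "ip d z z \<noteq> 0" using ip_self_zero j1 by blast
    define U where "U = (\<lambda>a. if a < d then v a else z)"
    obtain c where c: "\<forall>a. a \<notin> {..d} \<longrightarrow> c a = 0" "\<exists>a\<in>{..d}. c a \<noteq> 0"
        "\<forall>i<d. (\<Sum>a\<in>{..d}. U a i * c a) = 0"
      using dim_exists[of "{..d}" d "\<lambda>i a. U a i"] by auto
    have key: "(\<Sum>a\<in>{..d}. c a * ip d y (U a)) = 0" for y
    proof -
      have "(\<Sum>a\<in>{..d}. c a * ip d y (U a)) = (\<Sum>i<d. cnj (y i) * (\<Sum>a\<in>{..d}. U a i * c a))"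
      proof -
        have "(\<Sum>a\<in>{..d}. c a * ip d y (U a)) = (\<Sum>a\<in>{..d}. \<Sum>i<d. cnj (y i) * (U a i * c a))"
          unfolding ip_def by (simp add: sum_distrib_left mult.commute mult.left_commute)
        also have "\<dots> = (\<Sum>i<d. \<Sum>a\<in>{..d}. cnj (y i) * (U a i * c a))" by (rule sum.swap)
        finally show ?thesis by (simp add: sum_distrib_left)
      qed
      also have "\<dots> = 0" using c(3) by simp
      finally show ?thesis .
    qed
    have split: "\<And>f. (\<Sum>a\<in>{..d}. f a) = (\<Sum>a<d. f a) + f d"
      by (simp add: lessThan_Suc_atMost[symmetric])
    have cb: "c b = 0" if b: "b < d" for b
    proof -
      have "(\<Sum>a<d. c a * ip d (v b) (U a)) = (\<Sum>a<d. if a = b then c a else 0)"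
        by (rule sum.cong[OF refl]) (simp add: on_ip[OF on] b U_def)
      then have "(\<Sum>a<d. c a * ip d (v b) (U a)) = c b" using b by simp
      moreover have "ip d (v b) (U d) = 0" using ipz b by (simp add: U_def)
      ultimately show ?thesis using key[of "v b"] unfolding split by simp
    qed
    have ipzv: "ip d z (v a) = 0" if "a < d" for a
    proof -
      have "ip d z (v a) = cnj (ip d (v a) z)" unfolding ip_def by (simp add: mult.commute)
      then show ?thesis using ipz that by simp
    qed
    have "(\<Sum>a<d. c a * ip d z (U a)) = 0" by (rule sum.neutral) (simp add: cb)
    then have "c d * ip d z z = 0" using key[of z] unfolding split by (simp add: U_def)
    then have "c d = 0" using zz by simp
    then show False using c(2) cb by (metis atMost_iff le_neq_implies_less)
  qed
  then show ?thesis using j unfolding z_def co_def by simp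
qed

lemma ip_delta: "k < d \<Longrightarrow> ip d u (\<lambda>l. if l = k then 1 else 0) = cnj (u k)"
proof -
  assume k: "k < d"
  have "ip d u (\<lambda>l. if l = k then 1 else 0) = (\<Sum>l<d. if l = k then cnj (u l) else 0)"
    unfolding ip_def by (rule sum.cong[OF refl]) simp
  also have "\<dots> = cnj (u k)" using k by simp
  finally show ?thesis .
qed

lemma orth_complete:
  assumes on: "orthonormal_fam d v" and j: "j < d" and k: "k < d"
  shows "(\<Sum>a<d. v a j * cnj (v a k)) = (if j = k then 1 else 0)"
proof -
  have "(if j = k then 1 else 0) = (\<Sum>a<d. ip d (v a) (\<lambda>l. if l = k then 1 else 0) * v a j)"
    using orth_expand[OF on j, of "\<lambda>l. if l = k then 1 else 0"] by simp
  also have "\<dots> = (\<Sum>a<d. v a j * cnj (v a k))"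
    by (rule sum.cong[OF refl]) (simp add: ip_delta[OF k] mult.commute)
  finally show ?thesis by simp
qed

lemma parseval:
  assumes on: "orthonormal_fam d v"
  shows "ip d y w = (\<Sum>a<d. cnj (ip d (v a) y) * ip d (v a) w)"
proof -
  define co where "co = (\<lambda>a. ip d (v a) w)"
  have "ip d y w = (\<Sum>j<d. cnj (y j) * (\<Sum>a<d. co a * v a j))"
    unfolding ip_def[of d y w] co_def
    by (rule sum.cong[OF refl]) (use orth_expand[OF on] in simp)
  also have "\<dots> = (\<Sum>j<d. \<Sum>a<d. co a * (cnj (y j) * v a j))"
    by (simp only: sum_distrib_left mult.left_commute)
  also have "\<dots> = (\<Sum>a<d. \<Sum>j<d. co a * (cnj (y j) * v a j))" by (rule sum.swap)
  also have "\<dots> = (\<Sum>a<d. co a * ip d y (v a))"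
    unfolding ip_def by (simp only: sum_distrib_left)
  also have "\<dots> = (\<Sum>a<d. cnj (ip d (v a) y) * ip d (v a) w)"
    unfolding co_def by (rule sum.cong[OF refl]) (simp add: ip_def mult.commute)
  finally show ?thesis .
qed


definition matvec :: "nat \<Rightarrow> cmat \<Rightarrow> (nat \<Rightarrow> complex) \<Rightarrow> (nat \<Rightarrow> complex)" where
  "matvec d A u = (\<lambda>j. \<Sum>l<d. A j l * u l)"

lemma eigvec_exists:
  assumes d: "0 < d"
  shows "\<exists>e (v::nat\<Rightarrow>complex). (\<exists>j<d. v j \<noteq> 0) \<and> (\<forall>j<d. matvec d A v j = e * v j)"
proof -
  define M where "M = mat d d (\<lambda>(i,j). A i j)"
  have M: "M \<in> carrier_mat d d" unfolding M_def by simp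
  from spectrum_non_empty[OF M d] obtain e where "e \<in> spectrum M" by auto
  then have "eigenvalue M e" unfolding spectrum_def by simp
  then obtain v where ev: "eigenvector M v e" unfolding eigenvalue_def by auto
  then have v: "v \<in> carrier_vec d" "v \<noteq> 0\<^sub>v d" "M *\<^sub>v v = e \<cdot>\<^sub>v v"
    unfolding eigenvector_def using M by auto
  define w where "w = (\<lambda>j. if j < d then v $ j else 0)"
  have "\<exists>j<d. w j \<noteq> 0"
  proof (rule ccontr)
    assume "\<not> (\<exists>j<d. w j \<noteq> 0)"
    then have "v = 0\<^sub>v d" using v(1) by (intro eq_vecI) (auto simp: w_def)
    with v(2) show False by simp
  qed
  moreover have "matvec d A w j = e * w j" if j: "j < d" for j
  proof -
    have "(M *\<^sub>v v) $ j = e * v $ j" using v(3) v(1) j by simp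
    moreover have "(M *\<^sub>v v) $ j = (\<Sum>l<d. A j l * v $ l)"
      using j M v(1) by (simp add: M_def scalar_prod_def row_def atLeast0LessThan)
    ultimately show ?thesis using j unfolding matvec_def w_def by simp
  qed
  ultimately show ?thesis by blast
qed

definition ortho :: "nat \<Rightarrow> nat \<Rightarrow> (nat \<Rightarrow> nat \<Rightarrow> complex) \<Rightarrow> bool" where
  "ortho k d v \<longleftrightarrow> (\<forall>a<k. \<forall>b<k. ip d (v a) (v b) = (if a = b then 1 else 0))"

lemma ortho_fam: "orthonormal_fam d v \<longleftrightarrow> ortho d d v"
  unfolding ortho_def orthonormal_fam_def ip_def by simp

lemma ip_scale: "ip d (\<lambda>j. c * w j) (\<lambda>j. c' * w' j) = cnj c * c' * ip d w w'"
  unfolding ip_def by (simp add: sum_distrib_left algebra_simps)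

lemma ip_cnj: "ip d u w = cnj (ip d w u)"
  unfolding ip_def by (simp add: mult.commute)

lemma normalize:
  assumes "\<exists>j<d. w j \<noteq> 0"
  shows "\<exists>c::real. c > 0 \<and> ip d (\<lambda>j. of_real c * w j) (\<lambda>j. of_real c * w j) = 1"
proof -
  define s where "s = (\<Sum>j<d. (cmod (w j))\<^sup>2)"
  have "ip d w w \<noteq> 0" using assms ip_self_zero by blast
  moreover have "ip d w w = complex_of_real s" unfolding s_def by (rule ip_self_real)
  ultimately have s0: "s \<noteq> 0" by auto
  have "s \<ge> 0" unfolding s_def by (simp add: sum_nonneg)
  with s0 have sp: "s > 0" by simp
  define c where "c = 1 / sqrt s"
  have c: "c > 0" using sp by (simp add: c_def)
  have "ip d (\<lambda>j. of_real c * w j) (\<lambda>j. of_real c * w j) = of_real (c * c * s)"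
  proof -
    have "ip d (\<lambda>j. of_real c * w j) (\<lambda>j. of_real c * w j) = cnj (of_real c) * of_real c * complex_of_real s"
      unfolding s_def ip_scale ip_self_real[symmetric] ..
    then show ?thesis by simp
  qed
  also have "c * c * s = 1" using sp by (simp add: c_def)
  finally show ?thesis using c by auto
qed

lemma ext_step:
  assumes "ortho k d b" "k < d"
  shows "\<exists>b'. ortho (Suc k) d b' \<and> (\<forall>a<k. b' a = b a)"
proof -
  obtain w where w: "\<exists>j\<in>{..<d}. w j \<noteq> 0" "\<forall>i<k. (\<Sum>j\<in>{..<d}. cnj (b i j) * w j) = 0"
    using dim_exists[of "{..<d}" k "\<lambda>i j. cnj (b i j)"] assms by auto
  then obtain c where c: "c > 0" "ip d (\<lambda>j. of_real c * w j) (\<lambda>j. of_real c * w j) = 1"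
    using normalize[of d w] by auto
  define b' where "b' = b(k := (\<lambda>j. of_real c * w j))"
  define w' where "w' = (\<lambda>j. of_real c * w j)"
  have o1: "ip d (b i) w' = 0" if "i < k" for i
  proof -
    have "ip d (b i) w' = of_real c * (\<Sum>j<d. cnj (b i j) * w j)"
      unfolding w'_def ip_def by (simp add: sum_distrib_left algebra_simps)
    then show ?thesis using w(2) that by simp
  qed
  have o2: "ip d w' (b i) = 0" if "i < k" for i
    using o1[OF that] ip_cnj[of d w' "b i"] by simp
  have "ortho (Suc k) d b'"
    unfolding ortho_def
  proof (intro allI impI)
    fix a a' assume a: "a < Suc k" "a' < Suc k"
    show "ip d (b' a) (b' a') = (if a = a' then 1 else 0)"
    proof (cases "a = k")
      case True
      then show ?thesis using a o2 c(2) by (cases "a' = k") (auto simp: b'_def w'_def)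
    next
      case False
      then have "a < k" using a by simp
      then show ?thesis using a o1 assms(1) unfolding ortho_def
        by (cases "a' = k") (auto simp: b'_def w'_def)
    qed
  qed
  then show ?thesis unfolding b'_def by auto
qed

lemma ext_basis:
  assumes "ortho k d b" "k \<le> d"
  shows "\<exists>b'. orthonormal_fam d b' \<and> (\<forall>a<k. b' a = b a)"
proof -
  have "\<forall>m. k + m \<le> d \<longrightarrow> (\<exists>b'. ortho (k + m) d b' \<and> (\<forall>a<k. b' a = b a))"
  proof
    fix m show "k + m \<le> d \<longrightarrow> (\<exists>b'. ortho (k + m) d b' \<and> (\<forall>a<k. b' a = b a))"
    proof (induction m)
      case 0 then show ?case using assms by auto
    next
      case (Suc m)
      show ?case
      proof
        assume "k + Suc m \<le> d"
        then obtain b' where b': "ortho (k + m) d b'" "\<forall>a<k. b' a = b a" using Suc by auto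
        from ext_step[OF b'(1)] \<open>k + Suc m \<le> d\<close> obtain b'' where
          "ortho (Suc (k + m)) d b''" "\<forall>a<k + m. b'' a = b' a" by auto
        then show "\<exists>b'. ortho (k + Suc m) d b' \<and> (\<forall>a<k. b' a = b a)" using b'(2)
          by (intro exI[of _ b'']) auto
      qed
    qed
  qed
  from this[rule_format, of "d - k"] assms(2) show ?thesis by (auto simp: ortho_fam)
qed

lemma ip_cong: "(\<And>j. j < d \<Longrightarrow> u j = u' j) \<Longrightarrow> (\<And>j. j < d \<Longrightarrow> v j = v' j) \<Longrightarrow> ip d u v = ip d u' v'"
  unfolding ip_def by (rule sum.cong) auto

lemma herm_ip:
  assumes "herm d A"
  shows "ip d u (matvec d A v) = ip d (matvec d A u) v"
proof -
  have "ip d u (matvec d A v) = (\<Sum>j<d. \<Sum>l<d. cnj (u j) * A j l * v l)"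
    unfolding ip_def matvec_def by (simp add: sum_distrib_left mult.assoc)
  also have "\<dots> = (\<Sum>l<d. \<Sum>j<d. cnj (u j) * A j l * v l)" by (rule sum.swap)
  also have "\<dots> = (\<Sum>l<d. \<Sum>j<d. cnj (A l j * u j) * v l)"
  proof (intro sum.cong refl)
    fix l j assume "l \<in> {..<d}" "j \<in> {..<d}"
    then have "A j l = cnj (A l j)" using assms unfolding herm_def by blast
    then show "cnj (u j) * A j l * v l = cnj (A l j * u j) * v l" by (simp add: mult.commute)
  qed
  also have "\<dots> = ip d (matvec d A u) v"
    unfolding ip_def matvec_def by (simp add: sum_distrib_right)
  finally show ?thesis .
qed

lemma sum_split_shift: "(\<Sum>a<k+(m::nat). f a) = (\<Sum>a<k. f a) + (\<Sum>p<m. f (k+p))"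
  by (induction m) (auto simp: add.assoc)

lemma ip_lin_right: "ip d u (\<lambda>j. \<Sum>q<m. c q * v q j) = (\<Sum>q<m. c q * ip d u (v q))"
proof -
  have "ip d u (\<lambda>j. \<Sum>q<m. c q * v q j) = (\<Sum>j<d. \<Sum>q<m. c q * (cnj (u j) * v q j))"
    unfolding ip_def by (simp add: sum_distrib_left mult.left_commute)
  also have "\<dots> = (\<Sum>q<m. \<Sum>j<d. c q * (cnj (u j) * v q j))" by (rule sum.swap)
  finally show ?thesis unfolding ip_def by (simp add: sum_distrib_left)
qed

lemma matvec_lin: "matvec d A (\<lambda>j. \<Sum>q<m. c q * v q j) j = (\<Sum>q<m. c q * matvec d A (v q) j)"
proof -
  have "matvec d A (\<lambda>j. \<Sum>q<m. c q * v q j) j = (\<Sum>l<d. \<Sum>q<m. c q * (A j l * v q l))"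
    unfolding matvec_def by (simp add: sum_distrib_left mult.left_commute)
  also have "\<dots> = (\<Sum>q<m. \<Sum>l<d. c q * (A j l * v q l))" by (rule sum.swap)
  finally show ?thesis unfolding matvec_def by (simp add: sum_distrib_left)
qed

lemma spectral_step:
  assumes A: "herm d A" and k: "k < d" and on: "orthonormal_fam d b"
    and ev: "\<forall>a<k. \<forall>j<d. matvec d A (b a) j = of_real (lam a) * b a j"
  shows "\<exists>b' lam'. orthonormal_fam d b' \<and>
     (\<forall>a<Suc k. \<forall>j<d. matvec d A (b' a) j = of_real (lam' a) * b' a j)"
proof -
  define m where "m = d - k"
  have m: "0 < m" "d = k + m" using k by (auto simp: m_def)
  define B where "B = (\<lambda>p q. ip d (b (k+p)) (matvec d A (b (k+q))))"
  obtain e c where c: "\<exists>p<m. c p \<noteq> 0" "\<forall>p<m. matvec m B c p = e * c p"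
    using eigvec_exists[OF m(1), of B] by auto
  define w where "w = (\<lambda>j. \<Sum>q<m. c q * b (k+q) j)"
  have ipbb: "ip d (b a) (b a') = (if a = a' then 1 else 0)" if "a < d" "a' < d" for a a'
    using on_ip[OF on that] .
  have lt: "k + q < d" if "q < m" for q using that m by simp
  have F1a: "ip d (b a) w = 0" if a: "a < k" for a
    unfolding w_def ip_lin_right using a k by (intro sum.neutral ballI) (simp add: ipbb lt)
  have F1b: "ip d (b (k+p)) w = c p" if p: "p < m" for p
  proof -
    have "ip d (b (k+p)) w = (\<Sum>q<m. if q = p then c q else 0)"
      unfolding w_def ip_lin_right using p by (intro sum.cong refl) (simp add: ipbb lt)
    then show ?thesis using p by simp
  qed
  have zeroA: "ip d (b a) (matvec d A (b (k+q))) = 0" if a: "a < k" and q: "q < m" for a q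
  proof -
    have "ip d (b a) (matvec d A (b (k+q))) = ip d (matvec d A (b a)) (b (k+q))" by (rule herm_ip[OF A])
    also have "\<dots> = ip d (\<lambda>j. of_real (lam a) * b a j) (\<lambda>j. 1 * b (k+q) j)"
      using ev a by (intro ip_cong) auto
    also have "\<dots> = 0" unfolding ip_scale using a q k by (simp add: ipbb lt)
    finally show ?thesis .
  qed
  have F2: "matvec d A (b (k+q)) j = (\<Sum>p<m. B p q * b (k+p) j)" if q: "q < m" and j: "j < d" for q j
  proof -
    have "matvec d A (b (k+q)) j = (\<Sum>a<k+m. ip d (b a) (matvec d A (b (k+q))) * b a j)"
      using orth_expand[OF on j] m by simp
    also have "\<dots> = (\<Sum>a<k. ip d (b a) (matvec d A (b (k+q))) * b a j) + (\<Sum>p<m. B p q * b (k+p) j)"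
      unfolding sum_split_shift B_def ..
    also have "(\<Sum>a<k. ip d (b a) (matvec d A (b (k+q))) * b a j) = 0"
      using zeroA q by (intro sum.neutral) auto
    finally show ?thesis by simp
  qed
  have F3: "matvec d A w j = e * w j" if j: "j < d" for j
  proof -
    have "matvec d A w j = (\<Sum>q<m. c q * (\<Sum>p<m. B p q * b (k+p) j))"
      unfolding w_def matvec_lin using F2 j by (intro sum.cong refl) auto
    also have "\<dots> = (\<Sum>q<m. \<Sum>p<m. c q * (B p q * b (k+p) j))" by (simp add: sum_distrib_left)
    also have "\<dots> = (\<Sum>p<m. \<Sum>q<m. c q * (B p q * b (k+p) j))" by (rule sum.swap)
    also have "\<dots> = (\<Sum>p<m. matvec m B c p * b (k+p) j)"
      unfolding matvec_def sum_distrib_right by (intro sum.cong refl) (simp add: mult_ac)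
    also have "\<dots> = (\<Sum>p<m. e * (c p * b (k+p) j))"
      using c(2) by (intro sum.cong refl) auto
    also have "\<dots> = e * w j" unfolding w_def by (simp add: sum_distrib_left)
    finally show ?thesis .
  qed
  have F4: "\<exists>j<d. w j \<noteq> 0"
  proof (rule ccontr)
    assume "\<not> (\<exists>j<d. w j \<noteq> 0)"
    then have "ip d (b (k+p)) w = 0" for p unfolding ip_def by (intro sum.neutral) auto
    with F1b c(1) show False by metis
  qed
  have ww: "ip d w w \<noteq> 0" using F4 ip_self_zero by blast
  have "ip d w (matvec d A w) = ip d (matvec d A w) w" by (rule herm_ip[OF A])
  moreover have "ip d w (matvec d A w) = e * ip d w w"
  proof -
    have "ip d w (matvec d A w) = ip d (\<lambda>j. 1 * w j) (\<lambda>j. e * w j)" using F3 by (intro ip_cong) auto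
    then show ?thesis unfolding ip_scale by simp
  qed
  moreover have "ip d (matvec d A w) w = cnj e * ip d w w"
  proof -
    have "ip d (matvec d A w) w = ip d (\<lambda>j. e * w j) (\<lambda>j. 1 * w j)" using F3 by (intro ip_cong) auto
    then show ?thesis unfolding ip_scale by simp
  qed
  ultimately have "e = cnj e" using ww by simp
  then have ereal: "e = of_real (Re e)" by (metis Reals_cnj_iff complex_is_Real_iff of_real_Re)
  obtain c0 where c0: "c0 > 0" "ip d (\<lambda>j. of_real c0 * w j) (\<lambda>j. of_real c0 * w j) = 1"
    using normalize[OF F4] by auto
  define w' where "w' = (\<lambda>j. of_real c0 * w j)"
  define b1 where "b1 = b(k := w')"
  have o1: "ip d (b a) w' = 0" if "a < k" for a
    using F1a[OF that] ip_scale[of d 1 "b a" "of_real c0" w] unfolding w'_def by simp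
  have o2: "ip d w' (b a) = 0" if "a < k" for a using o1[OF that] ip_cnj[of d w' "b a"] by simp
  have "ortho (Suc k) d b1"
    unfolding ortho_def
  proof (intro allI impI)
    fix a a' assume a: "a < Suc k" "a' < Suc k"
    show "ip d (b1 a) (b1 a') = (if a = a' then 1 else 0)"
    proof (cases "a = k")
      case True
      then show ?thesis using a o2 c0(2) by (cases "a' = k") (auto simp: b1_def w'_def)
    next
      case False
      then have "a < k" using a by simp
      then show ?thesis using a o1 ipbb k by (cases "a' = k") (auto simp: b1_def)
    qed
  qed
  from ext_basis[OF this] k obtain b2 where b2: "orthonormal_fam d b2" "\<forall>a<Suc k. b2 a = b1 a" by auto
  define lam' where "lam' = lam(k := Re e)"
  have "\<forall>a<Suc k. \<forall>j<d. matvec d A (b2 a) j = of_real (lam' a) * b2 a j"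
  proof (intro allI impI)
    fix a j assume a: "a < Suc k" and j: "j < d"
    show "matvec d A (b2 a) j = of_real (lam' a) * b2 a j"
    proof (cases "a = k")
      case True
      have "matvec d A w' j = of_real c0 * matvec d A w j"
        unfolding w'_def matvec_def by (simp add: sum_distrib_left mult.left_commute)
      then show ?thesis using True b2(2) F3[OF j] ereal
        by (simp add: b1_def w'_def lam'_def mult.left_commute)
    next
      case False
      then show ?thesis using a j b2(2) ev by (simp add: b1_def lam'_def)
    qed
  qed
  with b2(1) show ?thesis by blast
qed

lemma spectral:
  assumes A: "herm d A"
  shows "\<exists>lam v. eig_decomp d A lam v"
proof -
  have "\<forall>k\<le>d. \<exists>b lam. orthonormal_fam d b \<and> (\<forall>a<k. \<forall>j<d. matvec d A (b a) j = of_real (lam a) * b a j)"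
  proof (intro allI impI)
    fix k assume "k \<le> d"
    then show "\<exists>b lam. orthonormal_fam d b \<and> (\<forall>a<k. \<forall>j<d. matvec d A (b a) j = of_real (lam a) * b a j)"
    proof (induction k)
      case 0
      have "ortho 0 d b" for b unfolding ortho_def by simp
      then obtain b where "orthonormal_fam d b" using ext_basis[of 0 d] by blast
      then show ?case by blast
    next
      case (Suc k)
      then obtain b lam where "orthonormal_fam d b" "\<forall>a<k. \<forall>j<d. matvec d A (b a) j = of_real (lam a) * b a j"
        by auto
      from spectral_step[OF A _ this] Suc.prems show ?case by simp
    qed
  qed
  then obtain b lam where on: "orthonormal_fam d b" and ev: "\<forall>a<d. \<forall>j<d. matvec d A (b a) j = of_real (lam a) * b a j"
    by blast
  have "A j l = (\<Sum>a<d. of_real (lam a) * b a j * cnj (b a l))" if j: "j < d" and l: "l < d" for j l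
  proof -
    have "(\<Sum>m<d. A j m * (if m = l then 1 else 0)) = (\<Sum>m<d. if m = l then A j m else 0)"
      by (intro sum.cong refl) simp
    then have "A j l = (\<Sum>m<d. A j m * (if m = l then 1 else 0))" using l by simp
    also have "\<dots> = (\<Sum>m<d. A j m * (\<Sum>a<d. b a m * cnj (b a l)))"
      using orth_complete[OF on _ l] by (intro sum.cong refl) simp
    also have "\<dots> = (\<Sum>m<d. \<Sum>a<d. A j m * b a m * cnj (b a l))" by (simp add: sum_distrib_left mult.assoc)
    also have "\<dots> = (\<Sum>a<d. \<Sum>m<d. A j m * b a m * cnj (b a l))" by (rule sum.swap)
    also have "\<dots> = (\<Sum>a<d. matvec d A (b a) j * cnj (b a l))"
      unfolding matvec_def by (simp add: sum_distrib_right)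
    also have "\<dots> = (\<Sum>a<d. of_real (lam a) * b a j * cnj (b a l))"
      using ev j by (intro sum.cong refl) simp
    finally show ?thesis .
  qed
  with on show ?thesis unfolding eig_decomp_def by blast
qed


lemma herm_ip':
  assumes "\<forall>j<d. \<forall>l<d. A j l = cnj (A l j)"
  shows "ip d u (matvec d A v) = ip d (matvec d A u) v"
proof -
  have "ip d u (matvec d A v) = (\<Sum>j<d. \<Sum>l<d. cnj (u j) * A j l * v l)"
    unfolding ip_def matvec_def by (simp add: sum_distrib_left mult.assoc)
  also have "\<dots> = (\<Sum>l<d. \<Sum>j<d. cnj (u j) * A j l * v l)" by (rule sum.swap)
  also have "\<dots> = (\<Sum>l<d. \<Sum>j<d. cnj (A l j * u j) * v l)"
  proof (intro sum.cong refl)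
    fix l j assume "l \<in> {..<d}" "j \<in> {..<d}"
    then have "A j l = cnj (A l j)" using assms by blast
    then show "cnj (u j) * A j l * v l = cnj (A l j * u j) * v l" by (simp add: mult.commute)
  qed
  also have "\<dots> = ip d (matvec d A u) v"
    unfolding ip_def matvec_def by (simp add: sum_distrib_right)
  finally show ?thesis .
qed

lemma eig_on: "eig_decomp d A lam v \<Longrightarrow> orthonormal_fam d v"
  unfolding eig_decomp_def by simp

lemma eig_herm:
  assumes "eig_decomp d A lam v"
  shows "\<forall>j<d. \<forall>l<d. A j l = cnj (A l j)"
  using assms unfolding eig_decomp_def by (auto simp: mult_ac)

lemma eig_matvec:
  assumes e: "eig_decomp d A lam v" and a: "a < d" and j: "j < d"
  shows "matvec d A (v a) j = of_real (lam a) * v a j"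
proof -
  have on: "orthonormal_fam d v" using e by (rule eig_on)
  have "matvec d A (v a) j = (\<Sum>l<d. (\<Sum>c<d. of_real (lam c) * v c j * cnj (v c l)) * v a l)"
    unfolding matvec_def using e j unfolding eig_decomp_def by (intro sum.cong refl) auto
  also have "\<dots> = (\<Sum>l<d. \<Sum>c<d. of_real (lam c) * v c j * (cnj (v c l) * v a l))"
    by (simp add: sum_distrib_right mult.assoc)
  also have "\<dots> = (\<Sum>c<d. \<Sum>l<d. of_real (lam c) * v c j * (cnj (v c l) * v a l))" by (rule sum.swap)
  also have "\<dots> = (\<Sum>c<d. of_real (lam c) * v c j * ip d (v c) (v a))"
    unfolding ip_def by (simp add: sum_distrib_left)
  also have "\<dots> = (\<Sum>c<d. if c = a then of_real (lam c) * v c j else 0)"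
    using a by (intro sum.cong refl) (simp add: on_ip[OF on])
  also have "\<dots> = of_real (lam a) * v a j" using a by simp
  finally show ?thesis .
qed

lemma eig_overlap:
  assumes e1: "eig_decomp d A lam v" and e2: "eig_decomp d A mu w"
    and a: "a < d" and b: "b < d" and nz: "ip d (w b) (v a) \<noteq> 0"
  shows "lam a = mu b"
proof -
  have "ip d (w b) (matvec d A (v a)) = ip d (matvec d A (w b)) (v a)"
    by (rule herm_ip'[OF eig_herm[OF e1]])
  moreover have "ip d (w b) (matvec d A (v a)) = of_real (lam a) * ip d (w b) (v a)"
  proof -
    have "ip d (w b) (matvec d A (v a)) = ip d (\<lambda>j. 1 * w b j) (\<lambda>j. of_real (lam a) * v a j)"
      using eig_matvec[OF e1 a] by (intro ip_cong) auto
    then show ?thesis unfolding ip_scale by simp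
  qed
  moreover have "ip d (matvec d A (w b)) (v a) = of_real (mu b) * ip d (w b) (v a)"
  proof -
    have "ip d (matvec d A (w b)) (v a) = ip d (\<lambda>j. of_real (mu b) * w b j) (\<lambda>j. 1 * v a j)"
      using eig_matvec[OF e2 b] by (intro ip_cong) auto
    then show ?thesis unfolding ip_scale by simp
  qed
  ultimately show ?thesis using nz by simp
qed

lemma matfun_indep:
  assumes e1: "eig_decomp d A lam v" and e2: "eig_decomp d A mu w" and j: "j < d" and k: "k < d"
  shows "(\<Sum>a<d. of_real (f (lam a)) * v a j * cnj (v a k)) = (\<Sum>b<d. of_real (f (mu b)) * w b j * cnj (w b k))"
proof -
  have onv: "orthonormal_fam d v" and onw: "orthonormal_fam d w" using e1 e2 by (auto dest: eig_on)
  have "(\<Sum>a<d. of_real (f (lam a)) * v a j * cnj (v a k))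
      = (\<Sum>a<d. of_real (f (lam a)) * (\<Sum>b<d. ip d (w b) (v a) * w b j) * cnj (v a k))"
    using orth_expand[OF onw j] by (intro sum.cong refl) auto
  also have "\<dots> = (\<Sum>a<d. \<Sum>b<d. of_real (f (lam a)) * ip d (w b) (v a) * w b j * cnj (v a k))"
    by (simp add: sum_distrib_left sum_distrib_right mult.assoc)
  also have "\<dots> = (\<Sum>a<d. \<Sum>b<d. of_real (f (mu b)) * w b j * (ip d (w b) (v a) * cnj (v a k)))"
  proof (intro sum.cong refl)
    fix a b assume a: "a \<in> {..<d}" and b: "b \<in> {..<d}"
    show "of_real (f (lam a)) * ip d (w b) (v a) * w b j * cnj (v a k)
        = of_real (f (mu b)) * w b j * (ip d (w b) (v a) * cnj (v a k))"
    proof (cases "ip d (w b) (v a) = 0")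
      case True then show ?thesis by simp
    next
      case False
      then have "lam a = mu b" using eig_overlap[OF e1 e2] a b by auto
      then show ?thesis by (simp add: mult_ac)
    qed
  qed
  also have "\<dots> = (\<Sum>b<d. \<Sum>a<d. of_real (f (mu b)) * w b j * (ip d (w b) (v a) * cnj (v a k)))"
    by (rule sum.swap)
  also have "\<dots> = (\<Sum>b<d. of_real (f (mu b)) * w b j * cnj (\<Sum>a<d. ip d (v a) (w b) * v a k))"
  proof (intro sum.cong refl)
    fix b
    have "(\<Sum>a<d. ip d (w b) (v a) * cnj (v a k)) = cnj (\<Sum>a<d. ip d (v a) (w b) * v a k)"
      by (simp add: ip_cnj[of d "w b"])
    then show "(\<Sum>a<d. of_real (f (mu b)) * w b j * (ip d (w b) (v a) * cnj (v a k)))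
      = of_real (f (mu b)) * w b j * cnj (\<Sum>a<d. ip d (v a) (w b) * v a k)"
      by (simp add: sum_distrib_left[symmetric])
  qed
  also have "\<dots> = (\<Sum>b<d. of_real (f (mu b)) * w b j * cnj (w b k))"
    using orth_expand[OF onv k] by (intro sum.cong refl) auto
  finally show ?thesis .
qed

lemma matfun_eq:
  assumes e: "eig_decomp d A lam v"
  shows "mat_fun d f A = (\<lambda>j k. if j < d \<and> k < d then (\<Sum>a<d. of_real (f (lam a)) * v a j * cnj (v a k)) else 0)"
  unfolding mat_fun_def
proof (rule the_equality)
  show "\<exists>lam' v'. eig_decomp d A lam' v' \<and> (\<forall>j k. (if j < d \<and> k < d then (\<Sum>a<d. of_real (f (lam a)) * v a j * cnj (v a k)) else 0) =
          (if j < d \<and> k < d then \<Sum>a<d. of_real (f (lam' a)) * v' a j * cnj (v' a k) else 0))"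
    using e by blast
next
  fix B assume "\<exists>lam' v'. eig_decomp d A lam' v' \<and> (\<forall>j k. B j k =
          (if j < d \<and> k < d then \<Sum>a<d. of_real (f (lam' a)) * v' a j * cnj (v' a k) else 0))"
  then obtain lam' v' where e': "eig_decomp d A lam' v'" and B: "\<forall>j k. B j k =
          (if j < d \<and> k < d then \<Sum>a<d. of_real (f (lam' a)) * v' a j * cnj (v' a k) else 0)" by blast
  show "B = (\<lambda>j k. if j < d \<and> k < d then (\<Sum>a<d. of_real (f (lam a)) * v a j * cnj (v a k)) else 0)"
    using matfun_indep[OF e e'] B by (intro ext) auto
qed

lemma trace_decomp:
  assumes on: "orthonormal_fam d v"
  shows "(\<Sum>j<d. \<Sum>a<d. of_real (g a) * v a j * cnj (v a j)) = (\<Sum>a<d. of_real (g a))"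
proof -
  have "(\<Sum>j<d. \<Sum>a<d. of_real (g a) * v a j * cnj (v a j)) = (\<Sum>a<d. \<Sum>j<d. of_real (g a) * (cnj (v a j) * v a j))"
    by (subst sum.swap) (simp add: mult_ac)
  also have "\<dots> = (\<Sum>a<d. of_real (g a) * ip d (v a) (v a))" unfolding ip_def by (simp add: sum_distrib_left)
  also have "\<dots> = (\<Sum>a<d. of_real (g a))" by (intro sum.cong refl) (simp add: on_ip[OF on])
  finally show ?thesis .
qed

lemma hreg_eq:
  assumes e: "eig_decomp d X lam v"
  shows "hreg d \<theta> X = (\<Sum>a<d. \<theta> (lam a))"
proof -
  have "mtrace d (mat_fun d \<theta> X) = (\<Sum>j<d. \<Sum>a<d. of_real (\<theta> (lam a)) * v a j * cnj (v a j))"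
    unfolding mtrace_def matfun_eq[OF e] by simp
  also have "\<dots> = of_real (\<Sum>a<d. \<theta> (lam a))" using trace_decomp[OF eig_on[OF e]] by simp
  finally show ?thesis unfolding hreg_def by simp
qed

lemma spectraplex_decomp:
  assumes X: "X \<in> spectraplex d"
  shows "\<exists>lam v. eig_decomp d X lam v \<and> (\<forall>a<d. 0 \<le> lam a) \<and> (\<Sum>a<d. lam a) = 1"
proof -
  have psd: "psd d X" and tr: "mtrace d X = 1" using X unfolding spectraplex_def by auto
  then have h: "herm d X" unfolding psd_def by simp
  obtain lam v where e: "eig_decomp d X lam v" using spectral[OF h] by blast
  have on: "orthonormal_fam d v" using e by (rule eig_on)
  have "0 \<le> lam a" if a: "a < d" for a
  proof -
    have q: "0 \<le> Re (\<Sum>j<d. \<Sum>k<d. cnj (v a j) * X j k * v a k)" using psd unfolding psd_def by blast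
    have "(\<Sum>j<d. \<Sum>k<d. cnj (v a j) * X j k * v a k) = ip d (v a) (matvec d X (v a))"
      unfolding ip_def matvec_def by (simp add: sum_distrib_left mult.assoc)
    also have "\<dots> = ip d (\<lambda>j. 1 * v a j) (\<lambda>j. of_real (lam a) * v a j)"
      using eig_matvec[OF e a] by (intro ip_cong) auto
    also have "\<dots> = of_real (lam a)" unfolding ip_scale using a by (simp add: on_ip[OF on])
    finally show ?thesis using q by simp
  qed
  moreover have "(\<Sum>a<d. lam a) = 1"
  proof -
    have "mtrace d X = (\<Sum>j<d. \<Sum>a<d. of_real (lam a) * v a j * cnj (v a j))"
      unfolding mtrace_def using e unfolding eig_decomp_def by (intro sum.cong refl) auto
    also have "\<dots> = of_real (\<Sum>a<d. lam a)" using trace_decomp[OF on] by simp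
    finally have "complex_of_real (\<Sum>a<d. lam a) = 1" using tr by metis
    then show ?thesis by (metis of_real_eq_1_iff)
  qed
  ultimately show ?thesis using e by blast
qed


locale rk =
  fixes \<theta> th1 th2 :: "real \<Rightarrow> real"
  assumes rk: "regularizer_kernel \<theta> th1 th2"
begin

lemma cont0: "continuous_on {0..1} \<theta>" using rk unfolding regularizer_kernel_def by simp
lemma d1w: "x \<in> {0<..1} \<Longrightarrow> (\<theta> has_real_derivative th1 x) (at x within {0<..1})"
  using rk unfolding regularizer_kernel_def by simp
lemma d2w: "x \<in> {0<..1} \<Longrightarrow> (th1 has_real_derivative th2 x) (at x within {0<..1})"
  using rk unfolding regularizer_kernel_def by simp
lemma cpos: "\<exists>c>0. \<forall>x\<in>{0<..1}. c \<le> th2 x"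
  using rk unfolding regularizer_kernel_def by simp
lemma th2pos: "x \<in> {0<..1} \<Longrightarrow> 0 < th2 x"
  using cpos by force

lemma atint: "0 < x \<Longrightarrow> x < 1 \<Longrightarrow> at x within {0<..1} = at (x::real)"
  by (rule at_within_open_subset[of _ "{0<..<1}"]) auto

lemma d1: "0 < x \<Longrightarrow> x < 1 \<Longrightarrow> (\<theta> has_real_derivative th1 x) (at x)"
  using d1w[of x] atint[of x] by simp
lemma d2: "0 < x \<Longrightarrow> x < 1 \<Longrightarrow> (th1 has_real_derivative th2 x) (at x)"
  using d2w[of x] atint[of x] by simp

lemma cont1: "continuous_on {0<..1} th1"
  by (rule DERIV_continuous_on[OF d2w])

lemma mono1: assumes "0 < a" "a < b" "b \<le> 1" shows "th1 a < th1 b"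
proof -
  have "continuous_on {a..b} th1" by (rule continuous_on_subset[OF cont1]) (use assms in auto)
  moreover have "\<And>x. a < x \<Longrightarrow> x < b \<Longrightarrow> th1 differentiable (at x)"
  proof -
    fix x assume "a < x" "x < b"
    then have "(th1 has_real_derivative th2 x) (at x)" using assms by (intro d2) auto
    then show "th1 differentiable (at x)" unfolding real_differentiable_def by blast
  qed
  ultimately obtain l z where z: "a < z" "z < b" "DERIV th1 z :> l" "th1 b - th1 a = (b - a) * l"
    using MVT[OF assms(2)] by blast
  have "l = th2 z" using DERIV_unique[OF z(3) d2[of z]] z assms by auto
  moreover have "0 < th2 z" using th2pos z assms by auto
  ultimately have "0 < (b - a) * l" using assms by simp
  then show ?thesis using z(4) by simp
qed

lemma mono1_le: "0 < a \<Longrightarrow> a \<le> b \<Longrightarrow> b \<le> 1 \<Longrightarrow> th1 a \<le> th1 b"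
  using mono1[of a b] by (cases "a = b") auto

lemma mono1_iff: "0 < a \<Longrightarrow> a \<le> 1 \<Longrightarrow> 0 < b \<Longrightarrow> b \<le> 1 \<Longrightarrow> th1 a \<le> th1 b \<longleftrightarrow> a \<le> b"
  using mono1[of a b] mono1[of b a] by (cases a b rule: linorder_cases) auto

lemma gap:
  assumes p: "0 < p" "p \<le> 1" and y: "0 \<le> y" "y \<le> 1" and ne: "y \<noteq> p"
  shows "\<theta> p + th1 p * (y - p) < \<theta> y"
proof (cases "p < y")
  case True
  have "continuous_on {p..y} \<theta>" by (rule continuous_on_subset[OF cont0]) (use p y in auto)
  moreover have "\<And>x. p < x \<Longrightarrow> x < y \<Longrightarrow> \<theta> differentiable (at x)"
  proof -
    fix x assume "p < x" "x < y"
    then have "(\<theta> has_real_derivative th1 x) (at x)" using p y by (intro d1) auto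
    then show "\<theta> differentiable (at x)" unfolding real_differentiable_def by blast
  qed
  ultimately obtain l z where z: "p < z" "z < y" "DERIV \<theta> z :> l" "\<theta> y - \<theta> p = (y - p) * l"
    using MVT[OF True] by blast
  have "l = th1 z" using DERIV_unique[OF z(3) d1[of z]] z p y by auto
  moreover have "th1 p < th1 z" using mono1[of p z] z p y by auto
  ultimately have "(y - p) * th1 p < (y - p) * l" using True by simp
  then show ?thesis using z by (simp add: algebra_simps)
next
  case False
  then have yp: "y < p" using ne by simp
  have "continuous_on {y..p} \<theta>" by (rule continuous_on_subset[OF cont0]) (use p y in auto)
  moreover have "\<And>x. y < x \<Longrightarrow> x < p \<Longrightarrow> \<theta> differentiable (at x)"
  proof -
    fix x assume "y < x" "x < p"
    then have "(\<theta> has_real_derivative th1 x) (at x)" using p y by (intro d1) auto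
    then show "\<theta> differentiable (at x)" unfolding real_differentiable_def by blast
  qed
  ultimately obtain l z where z: "y < z" "z < p" "DERIV \<theta> z :> l" "\<theta> p - \<theta> y = (p - y) * l"
    using MVT[OF yp] by blast
  have "l = th1 z" using DERIV_unique[OF z(3) d1[of z]] z p y by auto
  moreover have "th1 z < th1 p" using mono1[of z p] z p y by auto
  ultimately have "(p - y) * l < (p - y) * th1 p" using yp by simp
  then show ?thesis using z by (simp add: algebra_simps)
qed

lemma construct:
  fixes lam :: "nat \<Rightarrow> real" and d :: nat
  assumes steep: "filterlim th1 at_bot (at_right 0)" and d: "0 < d"
  shows "\<exists>q \<mu>. (\<forall>k<d. 0 < q k \<and> q k \<le> 1 \<and> th1 (q k) = lam k - \<mu>) \<and> (\<Sum>k<d. q k) = 1"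
proof -
  define L where "L = Max (lam ` {..<d})"
  have Lge: "lam k \<le> L" if "k < d" for k unfolding L_def using that by (intro Max_ge) (auto intro: finite_imageI)
  have "L \<in> lam ` {..<d}" unfolding L_def using d by (intro Max_in) auto
  then obtain k0 where k0: "k0 < d" "lam k0 = L" by auto
  define m0 where "m0 = - (\<Sum>k<d. \<bar>lam k\<bar>)"
  have m0le: "m0 \<le> lam k" if "k < d" for k
  proof -
    have "\<bar>lam k\<bar> \<le> (\<Sum>k<d. \<bar>lam k\<bar>)" using that by (intro member_le_sum) auto
    then show ?thesis unfolding m0_def by linarith
  qed
  define e1 where "e1 = 1 / real d"
  have e1: "0 < e1" "e1 \<le> 1" "real d * e1 = 1" using d by (auto simp: e1_def)
  define \<mu>0 where "\<mu>0 = L - th1 1"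
  define \<mu>1 where "\<mu>1 = L - th1 e1"
  have \<mu>01: "\<mu>0 \<le> \<mu>1" unfolding \<mu>0_def \<mu>1_def using mono1_le[of e1 1] e1 by simp
  from steep have "eventually (\<lambda>x. th1 x \<le> m0 - \<mu>1) (at_right 0)"
    unfolding filterlim_at_bot by blast
  then obtain b where b: "b > 0" "\<forall>y>0. y < b \<longrightarrow> th1 y \<le> m0 - \<mu>1"
    unfolding eventually_at_right_field by auto
  define e2 where "e2 = min (b/2) e1"
  have e2: "0 < e2" "e2 \<le> e1" "th1 e2 \<le> m0 - \<mu>1" using b e1 by (auto simp: e2_def)
  define I where "I = {e2..1}"
  have I0: "I \<subseteq> {0<..1}" using e2 e1 by (auto simp: I_def)
  have contI: "continuous_on I th1" by (rule continuous_on_subset[OF cont1 I0])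
  have inj: "inj_on th1 I"
  proof (rule inj_onI)
    fix x y assume "x \<in> I" "y \<in> I" "th1 x = th1 y"
    moreover from this have "x \<in> {0<..1}" "y \<in> {0<..1}" using I0 by auto
    ultimately show "x = y" using mono1_iff[of x y] mono1_iff[of y x] by auto
  qed
  define g where "g = the_inv_into I th1"
  have gf: "g (th1 x) = x" if "x \<in> I" for x unfolding g_def using the_inv_into_f_f[OF inj that] .
  have img: "th1 ` I = {th1 e2..th1 1}"
  proof
    show "th1 ` I \<subseteq> {th1 e2..th1 1}" using I0 e2 by (auto simp: I_def intro!: mono1_le)
    show "{th1 e2..th1 1} \<subseteq> th1 ` I"
    proof
      fix y assume "y \<in> {th1 e2..th1 1}"
      then obtain x where "e2 \<le> x" "x \<le> 1" "th1 x = y"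
        using IVT'[of th1 e2 y 1] contI e2 e1 by (auto simp: I_def)
      then show "y \<in> th1 ` I" by (auto simp: I_def)
    qed
  qed
  have cg: "continuous_on {th1 e2..th1 1} g"
    using continuous_on_inv[OF contI _ ] gf img by (metis compact_Icc I_def)
  have gI: "g y \<in> I" and fg: "th1 (g y) = y" if yin: "y \<in> {th1 e2..th1 1}" for y
  proof -
    obtain x where "x \<in> I" "y = th1 x" using yin unfolding img[symmetric] by blast
    then show "g y \<in> I" "th1 (g y) = y" using gf by auto
  qed
  have gmono: "g y \<le> g y'" if "y \<in> {th1 e2..th1 1}" "y' \<in> {th1 e2..th1 1}" "y \<le> y'" for y y'
  proof -
    have "g y \<in> {0<..1}" "g y' \<in> {0<..1}" using gI[OF that(1)] gI[OF that(2)] I0 by auto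
    then show ?thesis using mono1_iff[of "g y" "g y'"] fg that by auto
  qed
  define \<Phi> where "\<Phi> = (\<lambda>\<mu>. \<Sum>k<d. g (lam k - \<mu>))"
  have rng: "lam k - \<mu> \<in> {th1 e2..th1 1}" if "k < d" "\<mu> \<in> {\<mu>0..\<mu>1}" for k \<mu>
    using that Lge[of k] m0le[of k] e2(3) by (auto simp: \<mu>0_def)
  have cPhi: "continuous_on {\<mu>0..\<mu>1} \<Phi>"
    unfolding \<Phi>_def
  proof (intro continuous_on_sum)
    fix k assume k: "k \<in> {..<d}"
    show "continuous_on {\<mu>0..\<mu>1} (\<lambda>\<mu>. g (lam k - \<mu>))"
      by (rule continuous_on_compose2[OF cg]) (use rng k in \<open>auto intro!: continuous_intros\<close>)
  qed
  have P0: "1 \<le> \<Phi> \<mu>0"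
  proof -
    have "g (lam k0 - \<mu>0) = 1" using k0 gf[of 1] e2 e1 by (simp add: \<mu>0_def I_def)
    moreover have "g (lam k0 - \<mu>0) \<le> \<Phi> \<mu>0" unfolding \<Phi>_def
    proof (rule member_le_sum)
      fix k assume "k \<in> {..<d} - {k0}"
      then have "g (lam k - \<mu>0) \<in> I" using gI rng \<mu>01 by auto
      then show "0 \<le> g (lam k - \<mu>0)" using I0 by auto
    qed (use k0 in auto)
    ultimately show ?thesis by simp
  qed
  have P1: "\<Phi> \<mu>1 \<le> 1"
  proof -
    have "g (lam k - \<mu>1) \<le> e1" if k: "k \<in> {..<d}" for k
    proof -
      have "g (lam k - \<mu>1) \<le> g (L - \<mu>1)"
        using rng[of k \<mu>1] rng[of k0 \<mu>1] k k0 \<mu>01 Lge[of k] by (intro gmono) auto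
      also have "L - \<mu>1 = th1 e1" unfolding \<mu>1_def by simp
      also have "g (th1 e1) = e1" using gf e2 e1 by (simp add: I_def)
      finally show ?thesis .
    qed
    then have "\<Phi> \<mu>1 \<le> (\<Sum>k<d. e1)" unfolding \<Phi>_def by (intro sum_mono) auto
    then show ?thesis using e1 by simp
  qed
  obtain \<mu> where \<mu>: "\<mu>0 \<le> \<mu>" "\<mu> \<le> \<mu>1" "\<Phi> \<mu> = 1" using IVT2'[OF P1 P0 \<mu>01 cPhi] by blast
  define q where "q = (\<lambda>k. g (lam k - \<mu>))"
  have "\<forall>k<d. 0 < q k \<and> q k \<le> 1 \<and> th1 (q k) = lam k - \<mu>"
  proof (intro allI impI)
    fix k assume k: "k < d"
    then have "lam k - \<mu> \<in> {th1 e2..th1 1}" using rng \<mu> by auto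
    then show "0 < q k \<and> q k \<le> 1 \<and> th1 (q k) = lam k - \<mu>" using gI fg I0 unfolding q_def by force
  qed
  moreover have "(\<Sum>k<d. q k) = 1" using \<mu>(3) unfolding \<Phi>_def q_def .
  ultimately show ?thesis by blast
qed

end


lemma normsq: "z * cnj z = (complex_of_real (cmod z))\<^sup>2" "cnj z * z = (complex_of_real (cmod z))\<^sup>2"
  by (metis complex_norm_square of_real_power, metis complex_norm_square of_real_power mult.commute)

lemma matvec_decomp:
  assumes e: "eig_decomp d A lam v" and j: "j < d"
  shows "matvec d A u j = (\<Sum>a<d. of_real (lam a) * v a j * ip d (v a) u)"
proof -
  have "matvec d A u j = (\<Sum>l<d. (\<Sum>a<d. of_real (lam a) * v a j * cnj (v a l)) * u l)"
    unfolding matvec_def using e j unfolding eig_decomp_def by (intro sum.cong refl) auto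
  also have "\<dots> = (\<Sum>l<d. \<Sum>a<d. of_real (lam a) * v a j * (cnj (v a l) * u l))"
    by (simp add: sum_distrib_right mult.assoc)
  also have "\<dots> = (\<Sum>a<d. \<Sum>l<d. of_real (lam a) * v a j * (cnj (v a l) * u l))" by (rule sum.swap)
  also have "\<dots> = (\<Sum>a<d. of_real (lam a) * v a j * ip d (v a) u)"
    unfolding ip_def by (simp add: sum_distrib_left)
  finally show ?thesis .
qed

lemma quad_decomp:
  assumes e: "eig_decomp d A lam v"
  shows "ip d u (matvec d A u) = of_real (\<Sum>a<d. lam a * (cmod (ip d (v a) u))\<^sup>2)"
proof -
  have "ip d u (matvec d A u) = (\<Sum>j<d. cnj (u j) * (\<Sum>a<d. of_real (lam a) * v a j * ip d (v a) u))"
    unfolding ip_def[of d u] using matvec_decomp[OF e] by (intro sum.cong refl) auto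
  also have "\<dots> = (\<Sum>j<d. \<Sum>a<d. of_real (lam a) * ip d (v a) u * (cnj (u j) * v a j))"
    by (simp add: sum_distrib_left mult_ac)
  also have "\<dots> = (\<Sum>a<d. \<Sum>j<d. of_real (lam a) * ip d (v a) u * (cnj (u j) * v a j))" by (rule sum.swap)
  also have "\<dots> = (\<Sum>a<d. of_real (lam a) * ip d (v a) u * ip d u (v a))"
    unfolding ip_def[of d u] by (simp add: sum_distrib_left)
  also have "\<dots> = (\<Sum>a<d. of_real (lam a * (cmod (ip d (v a) u))\<^sup>2))"
  proof (intro sum.cong refl)
    fix a
    have "ip d u (v a) = cnj (ip d (v a) u)" by (rule ip_cnj)
    then show "of_real (lam a) * ip d (v a) u * ip d u (v a) = of_real (lam a * (cmod (ip d (v a) u))\<^sup>2)"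
      by (simp add: normsq)
  qed
  also have "\<dots> = of_real (\<Sum>a<d. lam a * (cmod (ip d (v a) u))\<^sup>2)" by simp
  finally show ?thesis .
qed

lemma trace_mmult:
  assumes e: "eig_decomp d X x u"
  shows "mtrace d (mmult d Y X) = (\<Sum>a<d. of_real (x a) * ip d (u a) (matvec d Y (u a)))"
proof -
  have "mtrace d (mmult d Y X) = (\<Sum>j<d. \<Sum>l<d. Y j l * (\<Sum>a<d. of_real (x a) * u a l * cnj (u a j)))"
    unfolding mtrace_def mmult_def using e unfolding eig_decomp_def by (intro sum.cong refl) auto
  also have "\<dots> = (\<Sum>j<d. \<Sum>l<d. \<Sum>a<d. of_real (x a) * (cnj (u a j) * (Y j l * u a l)))"
    by (simp add: sum_distrib_left mult_ac)
  also have "\<dots> = (\<Sum>j<d. \<Sum>a<d. \<Sum>l<d. of_real (x a) * (cnj (u a j) * (Y j l * u a l)))"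
    by (rule sum.cong[OF refl], rule sum.swap)
  also have "\<dots> = (\<Sum>a<d. \<Sum>j<d. \<Sum>l<d. of_real (x a) * (cnj (u a j) * (Y j l * u a l)))" by (rule sum.swap)
  also have "\<dots> = (\<Sum>a<d. of_real (x a) * ip d (u a) (matvec d Y (u a)))"
    unfolding ip_def matvec_def by (simp add: sum_distrib_left)
  finally show ?thesis .
qed

lemma pars1:
  assumes onw: "orthonormal_fam d w" and onu: "orthonormal_fam d u" and a: "a < d"
  shows "(\<Sum>k<d. (cmod (ip d (w k) (u a)))\<^sup>2) = 1"
proof -
  have "ip d (u a) (u a) = (\<Sum>k<d. cnj (ip d (w k) (u a)) * ip d (w k) (u a))" by (rule parseval[OF onw])
  also have "\<dots> = of_real (\<Sum>k<d. (cmod (ip d (w k) (u a)))\<^sup>2)"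
    by (simp add: normsq)
  finally have "complex_of_real (\<Sum>k<d. (cmod (ip d (w k) (u a)))\<^sup>2) = 1" using on_ip[OF onu a a] by metis
  then show ?thesis by (metis of_real_eq_1_iff)
qed

lemma pars2:
  assumes onw: "orthonormal_fam d w" and onu: "orthonormal_fam d u" and k: "k < d"
  shows "(\<Sum>a<d. (cmod (ip d (w k) (u a)))\<^sup>2) = 1"
proof -
  have "(\<Sum>a<d. (cmod (ip d (w k) (u a)))\<^sup>2) = (\<Sum>a<d. (cmod (ip d (u a) (w k)))\<^sup>2)"
    by (intro sum.cong refl) (metis complex_mod_cnj ip_cnj)
  also have "\<dots> = 1" by (rule pars1[OF onu onw k])
  finally show ?thesis .
qed

lemma recon:
  assumes on: "orthonormal_fam d b" and ev: "\<forall>a<d. \<forall>j<d. matvec d A (b a) j = of_real (lam a) * b a j"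
    and j: "j < d" and l: "l < d"
  shows "A j l = (\<Sum>a<d. of_real (lam a) * b a j * cnj (b a l))"
proof -
  have "(\<Sum>m<d. A j m * (if m = l then 1 else 0)) = (\<Sum>m<d. if m = l then A j m else 0)"
    by (intro sum.cong refl) simp
  then have "A j l = (\<Sum>m<d. A j m * (if m = l then 1 else 0))" using l by simp
  also have "\<dots> = (\<Sum>m<d. A j m * (\<Sum>a<d. b a m * cnj (b a l)))"
    using orth_complete[OF on _ l] by (intro sum.cong refl) simp
  also have "\<dots> = (\<Sum>m<d. \<Sum>a<d. A j m * b a m * cnj (b a l))" by (simp add: sum_distrib_left mult.assoc)
  also have "\<dots> = (\<Sum>a<d. \<Sum>m<d. A j m * b a m * cnj (b a l))" by (rule sum.swap)
  also have "\<dots> = (\<Sum>a<d. matvec d A (b a) j * cnj (b a l))"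
    unfolding matvec_def by (simp add: sum_distrib_right)
  also have "\<dots> = (\<Sum>a<d. of_real (lam a) * b a j * cnj (b a l))"
    using ev j by (intro sum.cong refl) simp
  finally show ?thesis .
qed

lemma spectraplex_eig:
  assumes X: "X \<in> spectraplex d" and e: "eig_decomp d X lam v"
  shows "(\<forall>a<d. 0 \<le> lam a) \<and> (\<Sum>a<d. lam a) = 1"
proof -
  have psd: "psd d X" and tr: "mtrace d X = 1" using X unfolding spectraplex_def by auto
  have on: "orthonormal_fam d v" using e by (rule eig_on)
  have "0 \<le> lam a" if a: "a < d" for a
  proof -
    have q: "0 \<le> Re (\<Sum>j<d. \<Sum>k<d. cnj (v a j) * X j k * v a k)" using psd unfolding psd_def by blast
    have "(\<Sum>j<d. \<Sum>k<d. cnj (v a j) * X j k * v a k) = ip d (v a) (matvec d X (v a))"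
      unfolding ip_def matvec_def by (simp add: sum_distrib_left mult.assoc)
    also have "\<dots> = ip d (\<lambda>j. 1 * v a j) (\<lambda>j. of_real (lam a) * v a j)"
      using eig_matvec[OF e a] by (intro ip_cong) auto
    also have "\<dots> = of_real (lam a)" unfolding ip_scale using a by (simp add: on_ip[OF on])
    finally show ?thesis using q by simp
  qed
  moreover have "(\<Sum>a<d. lam a) = 1"
  proof -
    have "mtrace d X = (\<Sum>j<d. \<Sum>a<d. of_real (lam a) * v a j * cnj (v a j))"
      unfolding mtrace_def using e unfolding eig_decomp_def by (intro sum.cong refl) auto
    also have "\<dots> = of_real (\<Sum>a<d. lam a)" using trace_decomp[OF on] by simp
    finally have "complex_of_real (\<Sum>a<d. lam a) = 1" using tr by metis
    then show ?thesis by (metis of_real_eq_1_iff)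
  qed
  ultimately show ?thesis by blast
qed

lemma obj_formula:
  assumes eY: "eig_decomp d Y lam w" and eX: "eig_decomp d X x u"
  shows "Re (mtrace d (mmult d Y X)) - hreg d \<theta> X
      = (\<Sum>k<d. \<Sum>a<d. (cmod (ip d (w k) (u a)))\<^sup>2 * (lam k * x a - \<theta> (x a)))"
proof -
  define om where "om = (\<lambda>k a. (cmod (ip d (w k) (u a)))\<^sup>2)"
  have onw: "orthonormal_fam d w" and onu: "orthonormal_fam d u" using eY eX by (auto dest: eig_on)
  have "mtrace d (mmult d Y X) = (\<Sum>a<d. of_real (x a) * of_real (\<Sum>k<d. lam k * om k a))"
    unfolding trace_mmult[OF eX] quad_decomp[OF eY] om_def ..
  also have "\<dots> = of_real (\<Sum>a<d. \<Sum>k<d. om k a * (lam k * x a))"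
    by (simp add: sum_distrib_left mult_ac)
  finally have tr: "Re (mtrace d (mmult d Y X)) = (\<Sum>a<d. \<Sum>k<d. om k a * (lam k * x a))" by simp
  have "hreg d \<theta> X = (\<Sum>a<d. \<theta> (x a))" by (rule hreg_eq[OF eX])
  also have "\<dots> = (\<Sum>a<d. \<Sum>k<d. om k a * \<theta> (x a))"
  proof (intro sum.cong refl)
    fix a assume "a \<in> {..<d}"
    then have "(\<Sum>k<d. om k a) = 1" unfolding om_def using pars1[OF onw onu] by simp
    then show "\<theta> (x a) = (\<Sum>k<d. om k a * \<theta> (x a))" by (simp add: sum_distrib_right[symmetric])
  qed
  finally have "Re (mtrace d (mmult d Y X)) - hreg d \<theta> X = (\<Sum>a<d. \<Sum>k<d. om k a * (lam k * x a - \<theta> (x a)))"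
    using tr by (simp add: sum_subtractf right_diff_distrib)
  also have "\<dots> = (\<Sum>k<d. \<Sum>a<d. om k a * (lam k * x a - \<theta> (x a)))" by (rule sum.swap)
  finally show ?thesis unfolding om_def .
qed


context rk begin

lemma term_bound:
  assumes p: "0 < p" "p \<le> 1" and x: "0 \<le> x" "x \<le> 1" and l: "th1 p = l - \<mu>"
  shows "l * x - \<theta> x \<le> l * p - \<theta> p + \<mu> * (x - p)"
    and "x \<noteq> p \<Longrightarrow> l * x - \<theta> x < l * p - \<theta> p + \<mu> * (x - p)"
proof -
  show "x \<noteq> p \<Longrightarrow> l * x - \<theta> x < l * p - \<theta> p + \<mu> * (x - p)"
  proof -
    assume "x \<noteq> p"
    then have "\<theta> p + th1 p * (x - p) < \<theta> x" using gap p x by blast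
    then show ?thesis unfolding l by (simp add: algebra_simps)
  qed
  then show "l * x - \<theta> x \<le> l * p - \<theta> p + \<mu> * (x - p)" by (cases "x = p") auto
qed

lemma obj_le:
  assumes eY: "eig_decomp d Y lam w"
    and q: "\<forall>k<d. 0 < q k \<and> q k \<le> 1 \<and> th1 (q k) = lam k - \<mu>" and sq: "(\<Sum>k<d. q k) = 1"
    and eX: "eig_decomp d X x u" and xnn: "\<forall>a<d. 0 \<le> x a" and sx: "(\<Sum>a<d. x a) = 1"
  shows "Re (mtrace d (mmult d Y X)) - hreg d \<theta> X \<le> (\<Sum>k<d. lam k * q k - \<theta> (q k))"
    and "(\<Sum>k<d. lam k * q k - \<theta> (q k)) \<le> Re (mtrace d (mmult d Y X)) - hreg d \<theta> X
          \<Longrightarrow> \<forall>k<d. \<forall>a<d. ip d (w k) (u a) \<noteq> 0 \<longrightarrow> x a = q k"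
proof -
  define om where "om = (\<lambda>k a. (cmod (ip d (w k) (u a)))\<^sup>2)"
  have onw: "orthonormal_fam d w" and onu: "orthonormal_fam d u" using eY eX by (auto dest: eig_on)
  have s1: "(\<Sum>k<d. om k a) = 1" if "a < d" for a unfolding om_def using pars1[OF onw onu that] .
  have s2: "(\<Sum>a<d. om k a) = 1" if "k < d" for k unfolding om_def using pars2[OF onw onu that] .
  have x1: "x a \<le> 1" if a: "a < d" for a
  proof -
    have "x a \<le> (\<Sum>a<d. x a)" using a xnn by (intro member_le_sum) auto
    then show ?thesis using sx by simp
  qed
  define c where "c = (\<lambda>k. lam k * q k - \<theta> (q k))"
  define D where "D = (\<lambda>k a. om k a * ((c k + \<mu> * (x a - q k)) - (lam k * x a - \<theta> (x a))))"
  have obj: "Re (mtrace d (mmult d Y X)) - hreg d \<theta> X = (\<Sum>k<d. \<Sum>a<d. om k a * (lam k * x a - \<theta> (x a)))"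
    unfolding om_def by (rule obj_formula[OF eY eX])
  have Dnn: "0 \<le> D k a" if "k < d" "a < d" for k a
    unfolding D_def c_def om_def using term_bound(1)[of "q k" "x a" "lam k" \<mu>] q xnn x1 that
    by (intro mult_nonneg_nonneg) auto
  have R: "(\<Sum>k<d. \<Sum>a<d. om k a * (c k + \<mu> * (x a - q k))) = (\<Sum>k<d. c k)"
  proof -
    have "(\<Sum>k<d. \<Sum>a<d. om k a * (c k + \<mu> * (x a - q k)))
        = (\<Sum>k<d. c k * (\<Sum>a<d. om k a)) + \<mu> * (\<Sum>k<d. \<Sum>a<d. om k a * x a) - \<mu> * (\<Sum>k<d. q k * (\<Sum>a<d. om k a))"
      by (simp add: algebra_simps sum.distrib sum_subtractf sum_distrib_left)
    also have "(\<Sum>k<d. c k * (\<Sum>a<d. om k a)) = (\<Sum>k<d. c k)" using s2 by simp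
    also have "(\<Sum>k<d. q k * (\<Sum>a<d. om k a)) = 1" using s2 sq by simp
    also have "(\<Sum>k<d. \<Sum>a<d. om k a * x a) = (\<Sum>a<d. x a * (\<Sum>k<d. om k a))"
      by (subst sum.swap) (simp add: sum_distrib_left mult.commute)
    also have "\<dots> = 1" using s1 sx by simp
    finally show ?thesis by simp
  qed
  have SD: "(\<Sum>k<d. \<Sum>a<d. D k a) = (\<Sum>k<d. c k) - (Re (mtrace d (mmult d Y X)) - hreg d \<theta> X)"
    unfolding obj R[symmetric] D_def by (simp add: right_diff_distrib sum_subtractf)
  have "0 \<le> (\<Sum>k<d. \<Sum>a<d. D k a)" using Dnn by (intro sum_nonneg) auto
  then show "Re (mtrace d (mmult d Y X)) - hreg d \<theta> X \<le> (\<Sum>k<d. lam k * q k - \<theta> (q k))"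
    using SD unfolding c_def by simp
  show "\<forall>k<d. \<forall>a<d. ip d (w k) (u a) \<noteq> 0 \<longrightarrow> x a = q k"
    if ge: "(\<Sum>k<d. lam k * q k - \<theta> (q k)) \<le> Re (mtrace d (mmult d Y X)) - hreg d \<theta> X"
  proof (intro allI impI)
    fix k a assume k: "k < d" and a: "a < d" and nz: "ip d (w k) (u a) \<noteq> 0"
    have "(\<Sum>k<d. \<Sum>a<d. D k a) \<le> 0" using SD ge unfolding c_def by simp
    then have "(\<Sum>k<d. \<Sum>a<d. D k a) = 0" using \<open>0 \<le> (\<Sum>k<d. \<Sum>a<d. D k a)\<close> by simp
    then have "\<forall>k\<in>{..<d}. (\<Sum>a<d. D k a) = 0"
      by (subst sum_nonneg_eq_0_iff[symmetric]) (auto intro!: sum_nonneg Dnn)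
    then have "(\<Sum>a<d. D k a) = 0" using k by simp
    then have "\<forall>a\<in>{..<d}. D k a = 0"
      by (subst sum_nonneg_eq_0_iff[symmetric]) (auto intro!: Dnn k)
    then have D0: "D k a = 0" using a by simp
    have "om k a > 0" unfolding om_def using nz by simp
    show "x a = q k"
    proof (rule ccontr)
      assume "x a \<noteq> q k"
      then have "lam k * x a - \<theta> (x a) < c k + \<mu> * (x a - q k)"
        unfolding c_def using term_bound(2)[of "q k" "x a" "lam k" \<mu>] q xnn x1 k a by auto
      with \<open>om k a > 0\<close> have "0 < D k a" unfolding D_def by simp
      with D0 show False by simp
    qed
  qed
qed

lemma qmap_key:
  assumes Y: "herm d Y" and d: "0 < d" and steep: "filterlim th1 at_bot (at_right 0)"
    and e: "eig_decomp d (Qmap d \<theta> Y) x u"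
  shows "Qmap d \<theta> Y \<in> spectraplex d \<and> (\<exists>\<mu>. \<forall>b<d. 0 < x b \<and> x b \<le> 1 \<and>
           (\<forall>j<d. matvec d Y (u b) j = of_real (th1 (x b) + \<mu>) * u b j))"
proof -
  obtain lam w where eY: "eig_decomp d Y lam w" using spectral[OF Y] by blast
  have onw: "orthonormal_fam d w" using eY by (rule eig_on)
  obtain q \<mu> where q: "\<forall>k<d. 0 < q k \<and> q k \<le> 1 \<and> th1 (q k) = lam k - \<mu>" and sq: "(\<Sum>k<d. q k) = 1"
    using construct[OF steep d, of lam] by blast
  define Xs where "Xs = (\<lambda>j l. if j < d \<and> l < d then (\<Sum>k<d. of_real (q k) * w k j * cnj (w k l)) else 0)"
  have eXs: "eig_decomp d Xs q w" using onw unfolding eig_decomp_def Xs_def by simp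
  define obj where "obj = (\<lambda>X. Re (mtrace d (mmult d Y X)) - hreg d \<theta> X)"
  have hXs: "herm d Xs" unfolding herm_def Xs_def by (auto simp: mult_ac)
  have psdXs: "psd d Xs" unfolding psd_def
  proof (intro conjI allI hXs)
    fix v :: "nat \<Rightarrow> complex"
    have "(\<Sum>j<d. \<Sum>k<d. cnj (v j) * Xs j k * v k) = ip d v (matvec d Xs v)"
      unfolding ip_def matvec_def by (simp add: sum_distrib_left mult.assoc)
    also have "\<dots> = of_real (\<Sum>a<d. q a * (cmod (ip d (w a) v))\<^sup>2)" by (rule quad_decomp[OF eXs])
    finally have eq: "(\<Sum>j<d. \<Sum>k<d. cnj (v j) * Xs j k * v k) = of_real (\<Sum>a<d. q a * (cmod (ip d (w a) v))\<^sup>2)" .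
    have "0 \<le> (\<Sum>a<d. q a * (cmod (ip d (w a) v))\<^sup>2)"
      by (intro sum_nonneg mult_nonneg_nonneg) (use q in \<open>auto intro: less_imp_le\<close>)
    then show "0 \<le> Re (\<Sum>j<d. \<Sum>k<d. cnj (v j) * Xs j k * v k)"
      unfolding eq Re_complex_of_real .
  qed
  have trXs: "mtrace d Xs = 1"
  proof -
    have "mtrace d Xs = (\<Sum>j<d. \<Sum>a<d. of_real (q a) * w a j * cnj (w a j))"
      unfolding mtrace_def Xs_def by simp
    also have "\<dots> = of_real (\<Sum>a<d. q a)" using trace_decomp[OF onw] by simp
    finally show ?thesis using sq by simp
  qed
  have spXs: "Xs \<in> spectraplex d" unfolding spectraplex_def using psdXs trXs by simp
  have objXs: "obj Xs = (\<Sum>k<d. lam k * q k - \<theta> (q k))"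
  proof -
    have "obj Xs = (\<Sum>k<d. \<Sum>a<d. (cmod (ip d (w k) (w a)))\<^sup>2 * (lam k * q a - \<theta> (q a)))"
      unfolding obj_def by (rule obj_formula[OF eY eXs])
    also have "\<dots> = (\<Sum>k<d. \<Sum>a<d. if a = k then lam k * q a - \<theta> (q a) else 0)"
      by (intro sum.cong refl) (simp add: on_ip[OF onw])
    also have "\<dots> = (\<Sum>k<d. lam k * q k - \<theta> (q k))" by simp
    finally show ?thesis .
  qed
  have maxXs: "obj X' \<le> obj Xs" if X': "X' \<in> spectraplex d" for X'
  proof -
    have "herm d X'" using X' unfolding spectraplex_def psd_def by simp
    then obtain x' u' where e': "eig_decomp d X' x' u'" using spectral by blast
    have "(\<forall>a<d. 0 \<le> x' a) \<and> (\<Sum>a<d. x' a) = 1" by (rule spectraplex_eig[OF X' e'])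
    then have "obj X' \<le> (\<Sum>k<d. lam k * q k - \<theta> (q k))"
      unfolding obj_def using obj_le(1)[OF eY q sq e'] by blast
    then show ?thesis using objXs by simp
  qed
  have uniq: "X = Xs" if X: "X \<in> spectraplex d" and mx: "\<forall>X'\<in>spectraplex d. obj X' \<le> obj X" for X
  proof -
    have hX: "herm d X" using X unfolding spectraplex_def psd_def by simp
    then obtain x' u' where e': "eig_decomp d X x' u'" using spectral by blast
    have onu: "orthonormal_fam d u'" using e' by (rule eig_on)
    have xs: "(\<forall>a<d. 0 \<le> x' a) \<and> (\<Sum>a<d. x' a) = 1" by (rule spectraplex_eig[OF X e'])
    have "(\<Sum>k<d. lam k * q k - \<theta> (q k)) \<le> obj X" using mx spXs objXs by metis
    then have ov: "\<forall>k<d. \<forall>a<d. ip d (w k) (u' a) \<noteq> 0 \<longrightarrow> x' a = q k"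
      using obj_le(2)[OF eY q sq e'] xs unfolding obj_def by blast
    have mv: "\<forall>k<d. \<forall>j<d. matvec d X (w k) j = of_real (q k) * w k j"
    proof (intro allI impI)
      fix k j assume k: "k < d" and j: "j < d"
      have "matvec d X (w k) j = (\<Sum>a<d. of_real (x' a) * u' a j * ip d (u' a) (w k))"
        by (rule matvec_decomp[OF e' j])
      also have "\<dots> = (\<Sum>a<d. of_real (q k) * (ip d (u' a) (w k) * u' a j))"
      proof (intro sum.cong refl)
        fix a assume a: "a \<in> {..<d}"
        show "of_real (x' a) * u' a j * ip d (u' a) (w k) = of_real (q k) * (ip d (u' a) (w k) * u' a j)"
        proof (cases "ip d (u' a) (w k) = 0")
          case False
          then have "ip d (w k) (u' a) \<noteq> 0" by (metis ip_cnj complex_cnj_zero)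
          then have "x' a = q k" using ov k a by auto
          then show ?thesis by (simp add: mult_ac)
        qed simp
      qed
      also have "\<dots> = of_real (q k) * w k j"
        using orth_expand[OF onu j, of "w k"] by (simp add: sum_distrib_left)
      finally show "matvec d X (w k) j = of_real (q k) * w k j" .
    qed
    show "X = Xs"
    proof (intro ext)
      fix j l
      show "X j l = Xs j l"
      proof (cases "j < d \<and> l < d")
        case True
        then show ?thesis using recon[OF onw mv] unfolding Xs_def by simp
      next
        case False
        then show ?thesis using hX unfolding herm_def Xs_def by auto
      qed
    qed
  qed
  have Q: "Qmap d \<theta> Y = Xs"
    unfolding Qmap_def
  proof (rule the_equality)
    show "Xs \<in> spectraplex d \<and> (\<forall>X'\<in>spectraplex d. Re (mtrace d (mmult d Y X')) - hreg d \<theta> X'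
                          \<le> Re (mtrace d (mmult d Y Xs)) - hreg d \<theta> Xs)"
      using spXs maxXs unfolding obj_def by blast
    fix X assume "X \<in> spectraplex d \<and> (\<forall>X'\<in>spectraplex d. Re (mtrace d (mmult d Y X')) - hreg d \<theta> X'
                          \<le> Re (mtrace d (mmult d Y X)) - hreg d \<theta> X)"
    then show "X = Xs" using uniq unfolding obj_def by blast
  qed
  have e2: "eig_decomp d Xs x u" using e Q by simp
  have onu: "orthonormal_fam d u" using e2 by (rule eig_on)
  have xs: "(\<forall>a<d. 0 \<le> x a) \<and> (\<Sum>a<d. x a) = 1" by (rule spectraplex_eig[OF spXs e2])
  have ov: "\<forall>k<d. \<forall>a<d. ip d (w k) (u a) \<noteq> 0 \<longrightarrow> x a = q k"
    using obj_le(2)[OF eY q sq e2] xs objXs unfolding obj_def by simp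
  have "\<forall>b<d. 0 < x b \<and> x b \<le> 1 \<and> (\<forall>j<d. matvec d Y (u b) j = of_real (th1 (x b) + \<mu>) * u b j)"
  proof (intro allI impI)
    fix b assume b: "b < d"
    have "(\<Sum>k<d. (cmod (ip d (w k) (u b)))\<^sup>2) = 1" by (rule pars1[OF onw onu b])
    then obtain k where k: "k < d" "ip d (w k) (u b) \<noteq> 0"
      by (metis (no_types, lifting) norm_zero power_zero_numeral sum.neutral lessThan_iff zero_neq_one)
    then have xb: "x b = q k" using ov b by auto
    have "\<forall>j<d. matvec d Y (u b) j = of_real (th1 (x b) + \<mu>) * u b j"
    proof (intro allI impI)
      fix j assume j: "j < d"
      have "matvec d Y (u b) j = (\<Sum>k<d. of_real (lam k) * w k j * ip d (w k) (u b))"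
        by (rule matvec_decomp[OF eY j])
      also have "\<dots> = (\<Sum>k<d. of_real (th1 (x b) + \<mu>) * (ip d (w k) (u b) * w k j))"
      proof (intro sum.cong refl)
        fix k' assume k': "k' \<in> {..<d}"
        show "of_real (lam k') * w k' j * ip d (w k') (u b) = of_real (th1 (x b) + \<mu>) * (ip d (w k') (u b) * w k' j)"
        proof (cases "ip d (w k') (u b) = 0")
          case False
          then have "x b = q k'" using ov k' b by auto
          then have "lam k' = th1 (x b) + \<mu>" using q k' by auto
          then show ?thesis by (simp add: mult_ac)
        qed simp
      qed
      also have "\<dots> = of_real (th1 (x b) + \<mu>) * u b j"
        using orth_expand[OF onw j, of "u b"] by (simp add: sum_distrib_left)
      finally show "matvec d Y (u b) j = of_real (th1 (x b) + \<mu>) * u b j" .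
    qed
    then show "0 < x b \<and> x b \<le> 1 \<and> (\<forall>j<d. matvec d Y (u b) j = of_real (th1 (x b) + \<mu>) * u b j)"
      using xb q k by auto
  qed
  then show ?thesis using Q spXs by auto
qed

end


lemma mel_ip: "mel d u M a b = ip d (u a) (matvec d M (u b))"
  unfolding mel_def ip_def matvec_def by (simp add: sum_distrib_left mult.assoc)

lemma hvd_eq: "(f has_vector_derivative D) F \<Longrightarrow> D = E \<Longrightarrow> (f has_vector_derivative E) F"
  by simp

lemma notbot:
  fixes T :: "real set"
  assumes iT: "is_interval T" and two: "\<exists>s\<in>T. \<exists>s'\<in>T. s \<noteq> s'" and t: "t \<in> T"
  shows "at t within T \<noteq> bot"
proof -
  obtain s s' where ss: "s \<in> T" "s' \<in> T" "s \<noteq> s'" using two by blast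
  define p where "p = (if s = t then s' else s)"
  have p: "p \<in> T" "p \<noteq> t" using ss by (auto simp: p_def)
  define a where "a = min t p"
  define b where "b = max t p"
  have ab: "a < b" using p(2) unfolding a_def b_def by linarith
  have sub: "{a..b} \<subseteq> T"
  proof
    fix z assume z: "z \<in> {a..b}"
    show "z \<in> T"
    proof (cases "t \<le> p")
      case True
      then have "t \<le> z" "z \<le> p" using z unfolding a_def b_def by auto
      then show ?thesis using mem_is_interval_1_I[OF iT t p(1)] by blast
    next
      case False
      then have "p \<le> z" "z \<le> t" using z unfolding a_def b_def by auto
      then show ?thesis using mem_is_interval_1_I[OF iT p(1) t] by blast
    qed
  qed
  have "t \<in> {a..b}" unfolding a_def b_def by simp
  then have "t islimpt {a..b}" using islimpt_Icc[OF ab] by blast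
  then have "t islimpt T" using sub by (rule islimpt_subset)
  then show ?thesis using trivial_limit_within by blast
qed

lemma deriv_same:
  assumes f: "(f has_vector_derivative D) (at t within T)" and g: "(g has_vector_derivative E) (at t within T)"
    and eq: "\<forall>s\<in>T. f s = g s" and t: "t \<in> T" and nb: "at t within T \<noteq> bot"
  shows "D = E"
proof -
  have "(f has_vector_derivative E) (at t within T)"
    by (rule has_vector_derivative_transform[OF t _ g]) (use eq in auto)
  then show ?thesis using vector_derivative_unique_within[OF nb f] by simp
qed

lemma deriv_ip:
  assumes a: "\<forall>j<d. ((\<lambda>s. u s a j) has_vector_derivative ud a j) (at t within T)"
    and b: "\<forall>j<d. ((\<lambda>s. u s b j) has_vector_derivative ud b j) (at t within T)"
  shows "((\<lambda>s. ip d (u s a) (u s b)) has_vector_derivative (ip d (ud a) (u t b) + ip d (u t a) (ud b))) (at t within T)"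
proof -
  have "((\<lambda>s. \<Sum>j<d. cnj (u s a j) * u s b j) has_vector_derivative
      (\<Sum>j<d. cnj (u t a j) * ud b j + cnj (ud a j) * u t b j)) (at t within T)"
  proof (rule has_vector_derivative_sum)
    fix j assume "j \<in> {..<d}"
    then have j: "j < d" by simp
    show "((\<lambda>s. cnj (u s a j) * u s b j) has_vector_derivative cnj (u t a j) * ud b j + cnj (ud a j) * u t b j) (at t within T)"
      by (rule has_vector_derivative_mult[OF has_vector_derivative_cnj[OF a[rule_format, OF j]] b[rule_format, OF j]])
  qed
  then show ?thesis unfolding ip_def by (rule hvd_eq) (simp add: sum.distrib)
qed

lemma deriv_mel:
  assumes a: "\<forall>j<d. ((\<lambda>s. u s a j) has_vector_derivative ud a j) (at t within T)"
    and b: "\<forall>j<d. ((\<lambda>s. u s b j) has_vector_derivative ud b j) (at t within T)"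
    and M: "\<forall>j<d. \<forall>k<d. ((\<lambda>s. M s j k) has_vector_derivative M' j k) (at t within T)"
  shows "((\<lambda>s. mel d (u s) (M s) a b) has_vector_derivative
     (ip d (ud a) (matvec d (M t) (u t b)) + mel d (u t) M' a b + ip d (u t a) (matvec d (M t) (ud b)))) (at t within T)"
proof -
  have D: "((\<lambda>s. \<Sum>j<d. \<Sum>k<d. cnj (u s a j) * M s j k * u s b k) has_vector_derivative
      (\<Sum>j<d. \<Sum>k<d. cnj (u t a j) * M t j k * ud b k + (cnj (u t a j) * M' j k + cnj (ud a j) * M t j k) * u t b k))
      (at t within T)"
  proof (rule has_vector_derivative_sum)
    fix j assume "j \<in> {..<d}"
    then have j: "j < d" by simp
    show "((\<lambda>s. \<Sum>k<d. cnj (u s a j) * M s j k * u s b k) has_vector_derivative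
      (\<Sum>k<d. cnj (u t a j) * M t j k * ud b k + (cnj (u t a j) * M' j k + cnj (ud a j) * M t j k) * u t b k)) (at t within T)"
    proof (rule has_vector_derivative_sum)
      fix k assume "k \<in> {..<d}"
      then have k: "k < d" by simp
      show "((\<lambda>s. cnj (u s a j) * M s j k * u s b k) has_vector_derivative
        cnj (u t a j) * M t j k * ud b k + (cnj (u t a j) * M' j k + cnj (ud a j) * M t j k) * u t b k) (at t within T)"
        by (rule has_vector_derivative_mult[OF has_vector_derivative_mult[OF has_vector_derivative_cnj[OF a[rule_format, OF j]] M[rule_format, OF j k]] b[rule_format, OF k]])
    qed
  qed
  have "(\<Sum>j<d. \<Sum>k<d. cnj (u t a j) * M t j k * ud b k + (cnj (u t a j) * M' j k + cnj (ud a j) * M t j k) * u t b k)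
      = (\<Sum>j<d. \<Sum>k<d. cnj (ud a j) * M t j k * u t b k) + (\<Sum>j<d. \<Sum>k<d. cnj (u t a j) * M' j k * u t b k)
        + (\<Sum>j<d. \<Sum>k<d. cnj (u t a j) * M t j k * ud b k)"
    by (simp add: sum.distrib algebra_simps)
  moreover have "(\<Sum>j<d. \<Sum>k<d. cnj (ud a j) * M t j k * u t b k) = ip d (ud a) (matvec d (M t) (u t b))"
    unfolding ip_def matvec_def by (simp add: sum_distrib_left mult.assoc)
  moreover have "(\<Sum>j<d. \<Sum>k<d. cnj (u t a j) * M t j k * ud b k) = ip d (u t a) (matvec d (M t) (ud b))"
    unfolding ip_def matvec_def by (simp add: sum_distrib_left mult.assoc)
  ultimately have "(\<Sum>j<d. \<Sum>k<d. cnj (u t a j) * M t j k * ud b k + (cnj (u t a j) * M' j k + cnj (ud a j) * M t j k) * u t b k)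
     = ip d (ud a) (matvec d (M t) (u t b)) + mel d (u t) M' a b + ip d (u t a) (matvec d (M t) (ud b))"
    unfolding mel_def by simp
  then show ?thesis unfolding mel_def by (rule hvd_eq[OF D])
qed


theorem theorem1:
  fixes N :: nat and d :: "nat \<Rightarrow> nat" and \<Omega> :: "'w set" and P :: "'w \<Rightarrow> jop"
    and U :: "nat \<Rightarrow> 'w \<Rightarrow> real"
    and \<theta> th1 th2 :: "nat \<Rightarrow> real \<Rightarrow> real"
    and T :: "real set" and Y X :: "real \<Rightarrow> nat \<Rightarrow> cmat"
    and i :: nat and x :: "real \<Rightarrow> nat \<Rightarrow> real" and u :: "real \<Rightarrow> nat \<Rightarrow> nat \<Rightarrow> complex"
  assumes dims: "\<forall>p<N. 1 \<le> d p"
    and game: "povm N d \<Omega> P"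
    and reg: "\<forall>p<N. regularizer_kernel (\<theta> p) (th1 p) (th2 p)"
    and i: "i < N"
    and steep_i: "steep (th1 i)"
    and T: "is_interval T" "\<exists>s\<in>T. \<exists>s'\<in>T. s \<noteq> s'"
    and X_def: "\<forall>t p. X t p = Qmap (d p) (\<theta> p) (Y t p)"
    and Y_herm: "\<forall>t\<in>T. \<forall>p<N. herm (d p) (Y t p)"
    and FTQL: "\<forall>t\<in>T. \<forall>p<N. \<forall>j k.
        ((\<lambda>s. Y s p j k) has_vector_derivative Vgrad N d \<Omega> P U p (X t) j k) (at t within T)"
    and eig: "\<forall>t\<in>T. eig_decomp (d i) (X t i) (x t) (u t)"
    and eig_diff: "\<forall>t\<in>T. \<forall>\<alpha><d i. (\<lambda>s. x s \<alpha>) differentiable (at t within T) \<and>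
                       (\<forall>j<d i. (\<lambda>s. u s \<alpha> j) differentiable (at t within T))"
  shows "\<forall>t\<in>T. \<exists>Xd :: cmat.
     (\<forall>j k. ((\<lambda>s. X s i j k) has_vector_derivative Xd j k) (at t within T)) \<and>
     (\<forall>\<alpha><d i. \<forall>\<beta><d i.
        mel (d i) (u t) Xd \<alpha> \<beta> =
          (if \<alpha> = \<beta> then
             mel (d i) (u t) (Vgrad N d \<Omega> P U i (X t)) \<alpha> \<alpha> / of_real (th2 i (x t \<alpha>))
             - (\<Sum>\<gamma><d i. mel (d i) (u t) (Vgrad N d \<Omega> P U i (X t)) \<gamma> \<gamma> / of_real (th2 i (x t \<gamma>)))
               / of_real (\<Sum>\<gamma><d i. th2 i (x t \<alpha>) / th2 i (x t \<gamma>))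
           else of_real (dquot (th1 i) (th2 i) (x t \<beta>) (x t \<alpha>))
                * mel (d i) (u t) (Vgrad N d \<Omega> P U i (X t)) \<alpha> \<beta>))"
proof (intro ballI)
  fix t assume t: "t \<in> T"
  have D1: "0 < d i" using dims i by auto
  interpret rk "\<theta> i" "th1 i" "th2 i" using reg i by unfold_locales auto
  have stp: "filterlim (th1 i) at_bot (at_right 0)" using steep_i unfolding steep_def .
  have nb: "at t within T \<noteq> bot" by (rule notbot[OF T t])
  define V where "V = Vgrad N d \<Omega> P U i (X t)"
  have key: "X s i \<in> spectraplex (d i) \<and> (\<exists>\<mu>. \<forall>b<d i. 0 < x s b \<and> x s b \<le> 1 \<and>
      (\<forall>j<d i. matvec (d i) (Y s i) (u s b) j = of_real (th1 i (x s b) + \<mu>) * u s b j))" if s: "s \<in> T" for s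
  proof -
    have "eig_decomp (d i) (Qmap (d i) (\<theta> i) (Y s i)) (x s) (u s)" using eig s X_def by simp
    from qmap_key[OF _ D1 stp this] Y_herm s i X_def show ?thesis by simp
  qed
  define mu where "mu = (\<lambda>s. SOME \<mu>. \<forall>b<d i. 0 < x s b \<and> x s b \<le> 1 \<and>
      (\<forall>j<d i. matvec (d i) (Y s i) (u s b) j = of_real (th1 i (x s b) + \<mu>) * u s b j))"
  have mu: "\<forall>b<d i. 0 < x s b \<and> x s b \<le> 1 \<and>
      (\<forall>j<d i. matvec (d i) (Y s i) (u s b) j = of_real (th1 i (x s b) + mu s) * u s b j)" if s: "s \<in> T" for s
    unfolding mu_def using key[OF s] by (rule someI_ex[OF conjunct2])
  have spX: "X s i \<in> spectraplex (d i)" if "s \<in> T" for s using key that by blast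
  have hermX: "herm (d i) (X s i)" if "s \<in> T" for s using spX[OF that] unfolding spectraplex_def psd_def by simp
  have eigs: "eig_decomp (d i) (X s i) (x s) (u s)" if "s \<in> T" for s using eig that by blast
  have ons: "orthonormal_fam (d i) (u s)" if "s \<in> T" for s using eigs[OF that] by (rule eig_on)
  define xd where "xd = (\<lambda>a. vector_derivative (\<lambda>s. x s a) (at t within T))"
  define ud where "ud = (\<lambda>a j. vector_derivative (\<lambda>s. u s a j) (at t within T))"
  have hxd: "((\<lambda>s. x s a) has_vector_derivative xd a) (at t within T)" if "a < d i" for a
    unfolding xd_def using eig_diff t that vector_derivative_works by blast
  have hxd': "((\<lambda>s. x s a) has_field_derivative xd a) (at t within T)" if "a < d i" for a
    using hxd[OF that] has_real_derivative_iff_has_vector_derivative by blast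
  have hud: "\<forall>j<d i. ((\<lambda>s. u s a j) has_vector_derivative ud a j) (at t within T)" if "a < d i" for a
    unfolding ud_def using eig_diff t that vector_derivative_works by blast
  have hY: "\<forall>j<d i. \<forall>k<d i. ((\<lambda>s. Y s i j k) has_vector_derivative V j k) (at t within T)"
    using FTQL t i unfolding V_def by blast
  have Xdiff: "\<exists>Dv. ((\<lambda>s. X s i j k) has_vector_derivative Dv) (at t within T)" for j k
  proof (cases "j < d i \<and> k < d i")
    case True
    have "((\<lambda>s. \<Sum>a<d i. of_real (x s a) * u s a j * cnj (u s a k)) has_vector_derivative
        (\<Sum>a<d i. of_real (x t a) * u t a j * cnj (ud a k) + (of_real (x t a) * ud a j + of_real (xd a) * u t a j) * cnj (u t a k)))
        (at t within T)"
    proof (rule has_vector_derivative_sum)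
      fix a assume "a \<in> {..<d i}"
      then have a: "a < d i" by simp
      show "((\<lambda>s. of_real (x s a) * u s a j * cnj (u s a k)) has_vector_derivative
        of_real (x t a) * u t a j * cnj (ud a k) + (of_real (x t a) * ud a j + of_real (xd a) * u t a j) * cnj (u t a k))
        (at t within T)"
        by (rule has_vector_derivative_mult[OF has_vector_derivative_mult[OF has_vector_derivative_of_real[OF hxd'[OF a]]
            hud[OF a, rule_format, of j]] has_vector_derivative_cnj[OF hud[OF a, rule_format, of k]]])
          (use True in auto)
    qed
    then have "((\<lambda>s. X s i j k) has_vector_derivative
        (\<Sum>a<d i. of_real (x t a) * u t a j * cnj (ud a k) + (of_real (x t a) * ud a j + of_real (xd a) * u t a j) * cnj (u t a k)))
        (at t within T)"
      by (rule has_vector_derivative_transform[OF t, rotated]) (use eigs True in \<open>auto simp: eig_decomp_def\<close>)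
    then show ?thesis by blast
  next
    case False
    have "((\<lambda>s. X s i j k) has_vector_derivative 0) (at t within T)"
      by (rule has_vector_derivative_transform[OF t _ has_vector_derivative_const])
        (use hermX False in \<open>auto simp: herm_def\<close>)
    then show ?thesis by blast
  qed
  define Xd where "Xd = (\<lambda>j k. vector_derivative (\<lambda>s. X s i j k) (at t within T))"
  have hX: "((\<lambda>s. X s i j k) has_vector_derivative Xd j k) (at t within T)" for j k
    unfolding Xd_def using Xdiff[of j k] vector_derivative_works unfolding differentiable_def
    by (metis has_vector_derivative_def)
  define yb where "yb = (\<lambda>s b. complex_of_real (th1 i (x s b) + mu s))"
  have Fs: "mel (d i) (u s) (Y s i) a b = (if a = b then yb s b else 0)" if s: "s \<in> T" and a: "a < d i" and b: "b < d i" for s a b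
  proof -
    have "mel (d i) (u s) (Y s i) a b = ip (d i) (\<lambda>j. 1 * u s a j) (\<lambda>j. yb s b * u s b j)"
      unfolding mel_ip yb_def using mu[OF s] b by (intro ip_cong) auto
    then show ?thesis unfolding ip_scale using on_ip[OF ons[OF s] a b] by simp
  qed
  have Gs: "mel (d i) (u s) (X s i) a b = (if a = b then of_real (x s b) else 0)" if s: "s \<in> T" and a: "a < d i" and b: "b < d i" for s a b
  proof -
    have "mel (d i) (u s) (X s i) a b = ip (d i) (\<lambda>j. 1 * u s a j) (\<lambda>j. of_real (x s b) * u s b j)"
      unfolding mel_ip using eig_matvec[OF eigs[OF s] b] by (intro ip_cong) auto
    then show ?thesis unfolding ip_scale using on_ip[OF ons[OF s] a b] by simp
  qed
  have hermY: "herm (d i) (Y t i)" using Y_herm t i by blast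
  have O: "ip (d i) (ud a) (u t b) + ip (d i) (u t a) (ud b) = 0" if a: "a < d i" and b: "b < d i" for a b
  proof -
    have "((\<lambda>s. ip (d i) (u s a) (u s b)) has_vector_derivative (ip (d i) (ud a) (u t b) + ip (d i) (u t a) (ud b))) (at t within T)"
      by (rule deriv_ip[OF hud[OF a] hud[OF b]])
    moreover have "((\<lambda>s. if a = b then 1 else 0) has_vector_derivative (0::complex)) (at t within T)" by simp
    moreover have "\<forall>s\<in>T. ip (d i) (u s a) (u s b) = (if a = b then 1 else 0)" using on_ip[OF ons a b] by simp
    ultimately show ?thesis using deriv_same t nb by blast
  qed
  have FD: "((\<lambda>s. mel (d i) (u s) (Y s i) a b) has_vector_derivative
      (yb t b * ip (d i) (ud a) (u t b) + mel (d i) (u t) V a b + yb t a * ip (d i) (u t a) (ud b))) (at t within T)"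
    if a: "a < d i" and b: "b < d i" for a b
  proof -
    have D: "((\<lambda>s. mel (d i) (u s) (Y s i) a b) has_vector_derivative
     (ip (d i) (ud a) (matvec (d i) (Y t i) (u t b)) + mel (d i) (u t) V a b + ip (d i) (u t a) (matvec (d i) (Y t i) (ud b)))) (at t within T)"
      by (rule deriv_mel[OF hud[OF a] hud[OF b] hY])
    have e1: "ip (d i) (ud a) (matvec (d i) (Y t i) (u t b)) = yb t b * ip (d i) (ud a) (u t b)"
    proof -
      have "ip (d i) (ud a) (matvec (d i) (Y t i) (u t b)) = ip (d i) (\<lambda>j. 1 * ud a j) (\<lambda>j. yb t b * u t b j)"
        unfolding yb_def using mu[OF t] b by (intro ip_cong) auto
      then show ?thesis unfolding ip_scale by simp
    qed
    have e2: "ip (d i) (u t a) (matvec (d i) (Y t i) (ud b)) = yb t a * ip (d i) (u t a) (ud b)"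
    proof -
      have "ip (d i) (u t a) (matvec (d i) (Y t i) (ud b)) = ip (d i) (matvec (d i) (Y t i) (u t a)) (ud b)"
        by (rule herm_ip[OF hermY])
      also have "\<dots> = ip (d i) (\<lambda>j. yb t a * u t a j) (\<lambda>j. 1 * ud b j)"
        unfolding yb_def using mu[OF t] a by (intro ip_cong) auto
      finally show ?thesis unfolding ip_scale by (simp add: yb_def)
    qed
    show ?thesis using D unfolding e1 e2 .
  qed
  have hX': "\<forall>j<d i. \<forall>k<d i. ((\<lambda>s. X s i j k) has_vector_derivative Xd j k) (at t within T)" using hX by blast
  have GD: "((\<lambda>s. mel (d i) (u s) (X s i) a b) has_vector_derivative
      (of_real (x t b) * ip (d i) (ud a) (u t b) + mel (d i) (u t) Xd a b + of_real (x t a) * ip (d i) (u t a) (ud b))) (at t within T)"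
    if a: "a < d i" and b: "b < d i" for a b
  proof -
    have D: "((\<lambda>s. mel (d i) (u s) (X s i) a b) has_vector_derivative
     (ip (d i) (ud a) (matvec (d i) (X t i) (u t b)) + mel (d i) (u t) Xd a b + ip (d i) (u t a) (matvec (d i) (X t i) (ud b)))) (at t within T)"
      by (rule deriv_mel[OF hud[OF a] hud[OF b] hX'])
    have e1: "ip (d i) (ud a) (matvec (d i) (X t i) (u t b)) = of_real (x t b) * ip (d i) (ud a) (u t b)"
    proof -
      have "ip (d i) (ud a) (matvec (d i) (X t i) (u t b)) = ip (d i) (\<lambda>j. 1 * ud a j) (\<lambda>j. of_real (x t b) * u t b j)"
        using eig_matvec[OF eigs[OF t] b] by (intro ip_cong) auto
      then show ?thesis unfolding ip_scale by simp
    qed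
    have e2: "ip (d i) (u t a) (matvec (d i) (X t i) (ud b)) = of_real (x t a) * ip (d i) (u t a) (ud b)"
    proof -
      have "ip (d i) (u t a) (matvec (d i) (X t i) (ud b)) = ip (d i) (matvec (d i) (X t i) (u t a)) (ud b)"
        by (rule herm_ip[OF hermX[OF t]])
      also have "\<dots> = ip (d i) (\<lambda>j. of_real (x t a) * u t a j) (\<lambda>j. 1 * ud b j)"
        using eig_matvec[OF eigs[OF t] a] by (intro ip_cong) auto
      finally show ?thesis unfolding ip_scale by simp
    qed
    show ?thesis using D unfolding e1 e2 .
  qed
  show "\<exists>Xd :: cmat. (\<forall>j k. ((\<lambda>s. X s i j k) has_vector_derivative Xd j k) (at t within T)) \<and>
     (\<forall>\<alpha><d i. \<forall>\<beta><d i.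
        mel (d i) (u t) Xd \<alpha> \<beta> =
          (if \<alpha> = \<beta> then
             mel (d i) (u t) (Vgrad N d \<Omega> P U i (X t)) \<alpha> \<alpha> / of_real (th2 i (x t \<alpha>))
             - (\<Sum>\<gamma><d i. mel (d i) (u t) (Vgrad N d \<Omega> P U i (X t)) \<gamma> \<gamma> / of_real (th2 i (x t \<gamma>)))
               / of_real (\<Sum>\<gamma><d i. th2 i (x t \<alpha>) / th2 i (x t \<gamma>))
           else of_real (dquot (th1 i) (th2 i) (x t \<beta>) (x t \<alpha>))
                * mel (d i) (u t) (Vgrad N d \<Omega> P U i (X t)) \<alpha> \<beta>))"
  proof (intro exI conjI allI impI)
    show "((\<lambda>s. X s i j k) has_vector_derivative Xd j k) (at t within T)" for j k by (rule hX)
    fix \<alpha> \<beta> assume \<alpha>: "\<alpha> < d i" and \<beta>: "\<beta> < d i"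
    show "mel (d i) (u t) Xd \<alpha> \<beta> = (if \<alpha> = \<beta> then
             mel (d i) (u t) (Vgrad N d \<Omega> P U i (X t)) \<alpha> \<alpha> / of_real (th2 i (x t \<alpha>))
             - (\<Sum>\<gamma><d i. mel (d i) (u t) (Vgrad N d \<Omega> P U i (X t)) \<gamma> \<gamma> / of_real (th2 i (x t \<gamma>)))
               / of_real (\<Sum>\<gamma><d i. th2 i (x t \<alpha>) / th2 i (x t \<gamma>))
           else of_real (dquot (th1 i) (th2 i) (x t \<beta>) (x t \<alpha>))
                * mel (d i) (u t) (Vgrad N d \<Omega> P U i (X t)) \<alpha> \<beta>)"
    proof (cases "\<alpha> = \<beta>")
      case False
      define c where "c = ip (d i) (u t \<alpha>) (ud \<beta>)"
      have Oab: "ip (d i) (ud \<alpha>) (u t \<beta>) = - c" using O[OF \<alpha> \<beta>] unfolding c_def by (simp add: eq_neg_iff_add_eq_0)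
      have F0: "yb t \<beta> * ip (d i) (ud \<alpha>) (u t \<beta>) + mel (d i) (u t) V \<alpha> \<beta> + yb t \<alpha> * ip (d i) (u t \<alpha>) (ud \<beta>) = 0"
        by (rule deriv_same[OF FD[OF \<alpha> \<beta>] has_vector_derivative_const _ t nb]) (use Fs \<alpha> \<beta> False in auto)
      have G0: "of_real (x t \<beta>) * ip (d i) (ud \<alpha>) (u t \<beta>) + mel (d i) (u t) Xd \<alpha> \<beta> + of_real (x t \<alpha>) * ip (d i) (u t \<alpha>) (ud \<beta>) = 0"
        by (rule deriv_same[OF GD[OF \<alpha> \<beta>] has_vector_derivative_const _ t nb]) (use Gs \<alpha> \<beta> False in auto)
      have mV: "mel (d i) (u t) V \<alpha> \<beta> = of_real (th1 i (x t \<beta>) - th1 i (x t \<alpha>)) * c"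
        using F0 unfolding Oab c_def[symmetric] yb_def by (simp add: algebra_simps eq_neg_iff_add_eq_0)
      have mX: "mel (d i) (u t) Xd \<alpha> \<beta> = of_real (x t \<beta> - x t \<alpha>) * c"
        using G0 unfolding Oab c_def[symmetric] by (simp add: algebra_simps eq_neg_iff_add_eq_0)
      have xa: "0 < x t \<alpha>" "x t \<alpha> \<le> 1" and xb: "0 < x t \<beta>" "x t \<beta> \<le> 1" using mu[OF t] \<alpha> \<beta> by auto
      show ?thesis
      proof (cases "x t \<beta> = x t \<alpha>")
        case True
        then show ?thesis using False mX mV by (simp add: V_def[symmetric])
      next
        case ne: False
        have "th1 i (x t \<beta>) \<noteq> th1 i (x t \<alpha>)"
          using mono1[of "x t \<beta>" "x t \<alpha>"] mono1[of "x t \<alpha>" "x t \<beta>"] xa xb ne by (cases "x t \<beta> < x t \<alpha>") auto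
        then have "th1 i (x t \<beta>) - th1 i (x t \<alpha>) \<noteq> 0" by simp
        then show ?thesis using False ne mX mV
          by (simp add: dquot_def V_def[symmetric])
      qed
    next
      case True
      have xpos: "0 < x t g" "x t g \<le> 1" if "g < d i" for g using mu[OF t] that by blast+
      have t2pos: "0 < th2 i (x t g)" if "g < d i" for g using th2pos xpos[OF that] by auto
      have hG: "mel (d i) (u t) Xd g g = of_real (xd g)" if g: "g < d i" for g
      proof -
        have "of_real (x t g) * ip (d i) (ud g) (u t g) + mel (d i) (u t) Xd g g + of_real (x t g) * ip (d i) (u t g) (ud g) = of_real (xd g)"
          by (rule deriv_same[OF GD[OF g g] has_vector_derivative_of_real[OF hxd'[OF g]] _ t nb]) (use Gs g in auto)
        moreover have "of_real (x t g) * ip (d i) (ud g) (u t g) + of_real (x t g) * ip (d i) (u t g) (ud g) = 0"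
          using O[OF g g] by (simp add: distrib_left[symmetric])
        ultimately show ?thesis by (simp add: algebra_simps)
      qed
      have chain: "((\<lambda>s. complex_of_real (th1 i (x s g))) has_vector_derivative of_real (xd g * th2 i (x t g))) (at t within T)"
        if g: "g < d i" for g
      proof -
        have img: "(\<lambda>s. x s g) ` T \<subseteq> {0<..1}"
        proof
          fix z assume "z \<in> (\<lambda>s. x s g) ` T"
          then obtain s where s: "s \<in> T" "z = x s g" by blast
          have "0 < x s g \<and> x s g \<le> 1" using mu[OF s(1)] g by blast
          then show "z \<in> {0<..1}" using s by simp
        qed
        have "(th1 i has_field_derivative th2 i (x t g)) (at (x t g) within (\<lambda>s. x s g) ` T)"
          by (rule has_field_derivative_subset[OF d2w img]) (use xpos[OF g] in auto)
        then have "(th1 i has_vector_derivative th2 i (x t g)) (at (x t g) within (\<lambda>s. x s g) ` T)"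
          using has_real_derivative_iff_has_vector_derivative by blast
        from vector_diff_chain_within[OF hxd[OF g] this]
        have "((\<lambda>s. th1 i (x s g)) has_field_derivative (xd g * th2 i (x t g))) (at t within T)"
          using has_real_derivative_iff_has_vector_derivative by (simp add: o_def)
        then show ?thesis by (rule has_vector_derivative_of_real)
      qed
      have HD: "((\<lambda>s. mel (d i) (u s) (Y s i) g g - of_real (th1 i (x s g))) has_vector_derivative
          (mel (d i) (u t) V g g - of_real (xd g * th2 i (x t g)))) (at t within T)" if g: "g < d i" for g
      proof -
        have "yb t g * ip (d i) (ud g) (u t g) + yb t g * ip (d i) (u t g) (ud g) = 0"
          using O[OF g g] by (simp add: distrib_left[symmetric])
        then have "yb t g * ip (d i) (ud g) (u t g) + mel (d i) (u t) V g g + yb t g * ip (d i) (u t g) (ud g) - of_real (xd g * th2 i (x t g))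
          = mel (d i) (u t) V g g - of_real (xd g * th2 i (x t g))" by (simp add: algebra_simps)
        then show ?thesis by (rule hvd_eq[OF has_vector_derivative_diff[OF FD[OF g g] chain[OF g]]])
      qed
      define m where "m = mel (d i) (u t) V 0 0 - of_real (xd 0 * th2 i (x t 0))"
      have hF: "mel (d i) (u t) V g g = of_real (xd g * th2 i (x t g)) + m" if g: "g < d i" for g
      proof -
        have "mel (d i) (u t) V g g - of_real (xd g * th2 i (x t g)) = m" unfolding m_def
        proof (rule deriv_same[OF HD[OF g] HD[OF D1] _ t nb], intro ballI)
          fix s assume s: "s \<in> T"
          show "mel (d i) (u s) (Y s i) g g - of_real (th1 i (x s g)) = mel (d i) (u s) (Y s i) 0 0 - of_real (th1 i (x s 0))"
            using Fs[OF s g g] Fs[OF s D1 D1] by (simp add: yb_def)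
        qed
        then show ?thesis by (simp add: algebra_simps)
      qed
      have sxd: "(\<Sum>g<d i. xd g) = 0"
      proof -
        have "((\<lambda>s. \<Sum>g<d i. x s g) has_vector_derivative (\<Sum>g<d i. xd g)) (at t within T)"
          by (rule has_vector_derivative_sum) (use hxd in auto)
        moreover have "\<forall>s\<in>T. (\<Sum>g<d i. x s g) = 1" using spectraplex_eig[OF spX eigs] by blast
        ultimately show ?thesis using deriv_same[OF _ has_vector_derivative_const _ t nb] by blast
      qed
      define S where "S = (\<Sum>g<d i. 1 / th2 i (x t g))"
      have Spos: "0 < S" unfolding S_def using D1 t2pos by (intro sum_pos) auto
      have num: "(\<Sum>g<d i. mel (d i) (u t) V g g / of_real (th2 i (x t g))) = m * of_real S"
      proof -
        have "(\<Sum>g<d i. mel (d i) (u t) V g g / of_real (th2 i (x t g))) = (\<Sum>g<d i. of_real (xd g) + m * of_real (1 / th2 i (x t g)))"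
        proof (intro sum.cong refl)
          fix g assume "g \<in> {..<d i}"
          then have g: "g < d i" by simp
          have nz: "complex_of_real (th2 i (x t g)) \<noteq> 0" using t2pos[OF g] by simp
          show "mel (d i) (u t) V g g / of_real (th2 i (x t g)) = of_real (xd g) + m * of_real (1 / th2 i (x t g))"
            unfolding hF[OF g] using nz by (simp add: distrib_right divide_inverse)
        qed
        also have "\<dots> = of_real (\<Sum>g<d i. xd g) + m * of_real S"
          unfolding S_def by (simp add: sum.distrib sum_distrib_left)
        finally show ?thesis using sxd by simp
      qed
      have den: "(\<Sum>g<d i. th2 i (x t \<alpha>) / th2 i (x t g)) = th2 i (x t \<alpha>) * S"
        unfolding S_def by (simp add: sum_distrib_left)
      have a2: "th2 i (x t \<alpha>) \<noteq> 0" using t2pos[OF \<alpha>] by simp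
      show ?thesis using True unfolding V_def[symmetric] num den hG[OF \<alpha>] hF[OF \<alpha>]
        using a2 Spos hG[OF \<beta>] by (simp add: field_simps)
    qed
  qed
qed


end
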